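(* In the setting described in the context, for every $\boldsymbol{x}\in\mathbb{Z}_+^2$, $\hat\Phi^{(1)}_{\boldsymbol{x}}(z)$ is element-wise analytic in the open disk $\{z\in\mathbb{C}:|z|<\exp(\max_{(\theta_1,\theta_2)\in\bar\Gamma}\theta_1)\}$ and $\hat\Phi^{(2)}_{\boldsymbol{x}}(w)$ is element-wise analytic in the open disk $\{w\in\mathbb{C}:|w|<\exp(\max_{(\theta_1,\theta_2)\in\bar\Gamma}\theta_2)\}$.
   Context: Let $S_0=\{1,\dots,s_0\}$ be finite and $\{\boldsymbol{Y}_n\}$ a Markov chain on $\mathbb{S}=\mathbb{Z}^2\times S_0$ with $\mathbb{P}(\boldsymbol{Y}_{n+1}=(x_1+k,x_2+l,j')\mid\boldsymbol{Y}_n=(x_1,x_2,j))=[A_{k,l}]_{j,j'}$ for $k,l\in\{-1,0,1\}$ (no other transitions), $A_{k,l}$ nonnegative $s_0\times s_0$ with $\sum A_{k,l}$ stochastic. Let $\mathbb{S}_+=\mathbb{Z}_+^2\times S_0$, $P_+$ the restriction of the transition matrix to $\mathbb{S}_+$, $\tau=\inf\{n\ge0:\boldsymbol{Y}_n\notin\mathbb{S}_+\}$, $\tilde q_{\boldsymbol{y},\boldsymbol{y}'}=\mathbb{E}\big(\sum_{n=0}^{\tau-1}1(\boldsymbol{Y}_n=\boldsymbol{y}')\mid\boldsymbol{Y}_0=\boldsymbol{y}\big)$. With $\boldsymbol\pi_{*,*}$ the stationary distribution of $\sum A_{k,l}$, $a_1=\boldsymbol{\pi}_{*,*}\sum_l(A_{1,l}-A_{-1,l})\mathbf{1}$,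 $a_2=\boldsymbol{\pi}_{*,*}\sum_k(A_{k,1}-A_{k,-1})\mathbf{1}$. Standing assumptions: $\{\boldsymbol Y_n\}$ irreducible and aperiodic; $a_1<0$ or $a_2<0$; $P_+$ irreducible. For $\boldsymbol x,\boldsymbol x'\in\mathbb{Z}_+^2$, $N_{\boldsymbol{x},\boldsymbol{x}'}=(\tilde q_{(\boldsymbol{x},j),(\boldsymbol{x}',j')};j,j'\in S_0)$; $\hat\Phi^{(1)}_{\boldsymbol{x}}(z)=\sum_{k\ge1}z^kN_{\boldsymbol{x},(k,0)}$, $\hat\Phi^{(2)}_{\boldsymbol{x}}(w)=\sum_{k\ge1}w^kN_{\boldsymbol{x},(0,k)}$ for complex $z,w$. $\bar\Gamma=\{(\theta_1,\theta_2)\in\mathbb{R}^2:\mathrm{spr}(\sum_{k,l}e^{k\theta_1+l\theta_2}A_{k,l})\le1\}$. *)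

theory Defs
  imports "HOL-Analysis.Analysis" "Jordan_Normal_Form.Spectral_Radius"
begin

text \<open>Phases: S_0 = {0..<s0} (the paper's {1,...,s0} shifted by one).
  A k l i j is the (i,j) entry of the block A_{k,l}; only k,l in {-1,0,1} are used.\<close>

type_synonym state = "int \<times> int \<times> nat"

definition steps :: "int set" where "steps = {-1, 0, 1}"

definition trans_prob :: "(int \<Rightarrow> int \<Rightarrow> nat \<Rightarrow> nat \<Rightarrow> real) \<Rightarrow> nat \<Rightarrow> state \<Rightarrow> state \<Rightarrow> real" where
  "trans_prob A s0 y y' =
     (case y of (x1, x2, j) \<Rightarrow> case y' of (x1', x2', j') \<Rightarrow>
        if x1' - x1 \<in> steps \<and> x2' - x2 \<in> steps \<and> j < s0 \<and> j' < s0
        then A (x1' - x1) (x2' - x2) j j' else 0)"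

definition state_space :: "nat \<Rightarrow> state set" where
  "state_space s0 = {(x1, x2, j). j < s0}"

definition pos_space :: "nat \<Rightarrow> state set" where
  "pos_space s0 = {(x1, x2, j). 0 \<le> x1 \<and> 0 \<le> x2 \<and> j < s0}"

definition nbrs :: "nat \<Rightarrow> state \<Rightarrow> state set" where
  "nbrs s0 y = (case y of (x1, x2, j) \<Rightarrow>
      {(x1 + k, x2 + l, j'') | k l j''. k \<in> steps \<and> l \<in> steps \<and> j'' < s0})"

text \<open>n-step transition probabilities of a transition matrix P that only has
  transitions to neighbours (matrix power P^n).\<close>
fun npow :: "nat \<Rightarrow> (state \<Rightarrow> state \<Rightarrow> real) \<Rightarrow> nat \<Rightarrow> state \<Rightarrow> state \<Rightarrow> real" where
  "npow s0 P 0 y y' = (if y = y' then 1 else 0)"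
| "npow s0 P (Suc n) y y' = (\<Sum>y''\<in>nbrs s0 y. P y y'' * npow s0 P n y'' y')"

definition trans_plus :: "(int \<Rightarrow> int \<Rightarrow> nat \<Rightarrow> nat \<Rightarrow> real) \<Rightarrow> nat \<Rightarrow> state \<Rightarrow> state \<Rightarrow> real" where
  "trans_plus A s0 y y' =
     (if y \<in> pos_space s0 \<and> y' \<in> pos_space s0 then trans_prob A s0 y y' else 0)"

text \<open>Expected number of visits to y' before the exit time tau from S_+,
  starting at y:  E(sum_{n<tau} 1(Y_n = y') | Y_0 = y) = sum_n P(Y_n = y', tau > n)
  = sum_n (P_+^n)_{y,y'} (value in [0, infinity]).\<close>
definition qtilde :: "(int \<Rightarrow> int \<Rightarrow> nat \<Rightarrow> nat \<Rightarrow> real) \<Rightarrow> nat \<Rightarrow> state \<Rightarrow> state \<Rightarrow> ennreal" where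
  "qtilde A s0 y y' = (\<Sum>n. ennreal (npow s0 (trans_plus A s0) n y y'))"

definition Nblk :: "(int \<Rightarrow> int \<Rightarrow> nat \<Rightarrow> nat \<Rightarrow> real) \<Rightarrow> nat \<Rightarrow> int \<times> int \<Rightarrow> int \<times> int \<Rightarrow> nat \<Rightarrow> nat \<Rightarrow> real" where
  "Nblk A s0 x x' j j' = enn2real (qtilde A s0 (fst x, snd x, j) (fst x', snd x', j'))"

definition Phi1 :: "(int \<Rightarrow> int \<Rightarrow> nat \<Rightarrow> nat \<Rightarrow> real) \<Rightarrow> nat \<Rightarrow> int \<times> int \<Rightarrow> complex \<Rightarrow> nat \<Rightarrow> nat \<Rightarrow> complex" where
  "Phi1 A s0 x z j j' = (\<Sum>k. z ^ Suc k * complex_of_real (Nblk A s0 x (int (Suc k), 0) j j'))"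

definition Phi2 :: "(int \<Rightarrow> int \<Rightarrow> nat \<Rightarrow> nat \<Rightarrow> real) \<Rightarrow> nat \<Rightarrow> int \<times> int \<Rightarrow> complex \<Rightarrow> nat \<Rightarrow> nat \<Rightarrow> complex" where
  "Phi2 A s0 x w j j' = (\<Sum>k. w ^ Suc k * complex_of_real (Nblk A s0 x (0, int (Suc k)) j j'))"

definition Astar :: "(int \<Rightarrow> int \<Rightarrow> nat \<Rightarrow> nat \<Rightarrow> real) \<Rightarrow> nat \<Rightarrow> real \<Rightarrow> real \<Rightarrow> complex Matrix.mat" where
  "Astar A s0 th1 th2 = Matrix.mat s0 s0 (\<lambda>(i, j).
      complex_of_real (\<Sum>k\<in>steps. \<Sum>l\<in>steps. exp (of_int k * th1 + of_int l * th2) * A k l i j))"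

definition Gamma_bar :: "(int \<Rightarrow> int \<Rightarrow> nat \<Rightarrow> nat \<Rightarrow> real) \<Rightarrow> nat \<Rightarrow> (real \<times> real) set" where
  "Gamma_bar A s0 = {(th1, th2). spectral_radius (Astar A s0 th1 th2) \<le> 1}"

definition irreducible_on :: "nat \<Rightarrow> (state \<Rightarrow> state \<Rightarrow> real) \<Rightarrow> state set \<Rightarrow> bool" where
  "irreducible_on s0 P S = (\<forall>y\<in>S. \<forall>y'\<in>S. \<exists>n. npow s0 P n y y' > 0)"

definition aperiodic_on :: "nat \<Rightarrow> (state \<Rightarrow> state \<Rightarrow> real) \<Rightarrow> state set \<Rightarrow> bool" where
  "aperiodic_on s0 P S = (\<forall>y\<in>S. Gcd {n. n > 0 \<and> npow s0 P n y y > 0} = 1)"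

end

theory Submission
  imports Defs "HOL-Complex_Analysis.Complex_Analysis"
begin



definition Mt :: "(int \<Rightarrow> int \<Rightarrow> nat \<Rightarrow> nat \<Rightarrow> real) \<Rightarrow> real \<Rightarrow> real \<Rightarrow> nat \<Rightarrow> nat \<Rightarrow> real" where
  "Mt A a b i j = (\<Sum>k\<in>steps. \<Sum>l\<in>steps. exp (of_int k * a + of_int l * b) * A k l i j)"

fun mp :: "nat \<Rightarrow> (nat \<Rightarrow> nat \<Rightarrow> real) \<Rightarrow> nat \<Rightarrow> nat \<Rightarrow> nat \<Rightarrow> real" where
  "mp s0 M 0 i j = (if i = j then 1 else 0)"
| "mp s0 M (Suc n) i j = (\<Sum>m<s0. M i m * mp s0 M n m j)"

lemma finite_steps[simp]: "finite steps" by (simp add: steps_def)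

lemma sum_delta_mult: "i < (s0::nat) \<Longrightarrow> (\<Sum>m<s0. (if i = m then 1 else 0) * (g m::real)) = g i"
  by (simp add: if_distrib[of "\<lambda>x. x * _"] cong: if_cong)

lemma sum_delta_mult': "j < (s0::nat) \<Longrightarrow> (\<Sum>m<s0. (g m::real) * (if m = j then 1 else 0)) = g j"
  by (simp add: mult.commute[of _ "if _ then _ else _"] if_distrib[of "\<lambda>x. x * _"] cong: if_cong)

lemma mp_nonneg: "(\<And>i j. M i j \<ge> 0) \<Longrightarrow> mp s0 M n i j \<ge> 0"
  by (induction n arbitrary: i) (auto intro!: sum_nonneg)

lemma mp_add: "i < s0 \<Longrightarrow> mp s0 M (a + b) i j = (\<Sum>m<s0. mp s0 M a i m * mp s0 M b m j)"
proof (induction a arbitrary: i)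
  case 0
  then show ?case by (simp add: sum_delta_mult)
next
  case (Suc a)
  have "mp s0 M (Suc a + b) i j = (\<Sum>m<s0. M i m * (\<Sum>m'<s0. mp s0 M a m m' * mp s0 M b m' j))"
    using Suc by simp
  also have "\<dots> = (\<Sum>m<s0. \<Sum>m'<s0. M i m * mp s0 M a m m' * mp s0 M b m' j)"
    by (simp add: sum_distrib_left mult.assoc)
  also have "\<dots> = (\<Sum>m'<s0. \<Sum>m<s0. M i m * mp s0 M a m m' * mp s0 M b m' j)"
    by (rule sum.swap)
  also have "\<dots> = (\<Sum>m'<s0. (\<Sum>m<s0. M i m * mp s0 M a m m') * mp s0 M b m' j)"
    by (simp add: sum_distrib_right)
  finally show ?case by simp
qed

lemma mp_Suc_right: "i < s0 \<Longrightarrow> j < s0 \<Longrightarrow> mp s0 M (Suc n) i j = (\<Sum>m<s0. mp s0 M n i m * M m j)"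
  using mp_add[of i s0 M n 1 j] by (simp add: sum_delta_mult')
lemma npow_nonneg: "(\<And>y y'. P y y' \<ge> 0) \<Longrightarrow> npow s0 P n y y' \<ge> 0"
  by (induction n arbitrary: y) (auto intro!: sum_nonneg)

lemma Mt_nonneg: "(\<And>k l i j. A k l i j \<ge> 0) \<Longrightarrow> Mt A a b i j \<ge> 0"
  unfolding Mt_def by (auto intro!: sum_nonneg)

lemma nbrs_eq: "nbrs s0 (x1, x2, j) = (\<lambda>(k, l, j''). (x1 + k, x2 + l, j'')) ` (steps \<times> steps \<times> {..<s0})"
  unfolding nbrs_def by (auto simp: image_def)

lemma sum_prod3: "finite A \<Longrightarrow> finite B \<Longrightarrow> finite C \<Longrightarrow> (\<Sum>x\<in>A\<times>B\<times>C. g x) = (\<Sum>a\<in>A. \<Sum>b\<in>B. \<Sum>c\<in>C. g (a,b,c))"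
  by (simp add: sum.cartesian_product split_def)
lemma sum_nbrs: "(\<Sum>y\<in>nbrs s0 (x1, x2, j). f y) = (\<Sum>k\<in>steps. \<Sum>l\<in>steps. \<Sum>j''<s0. f (x1 + k, x2 + l, j''))"
proof -
  have inj: "inj_on (\<lambda>(k, l, j''). (x1 + k, x2 + l, j'')) (steps \<times> steps \<times> {..<s0})"
    by (auto simp: inj_on_def)
  have "(\<Sum>y\<in>nbrs s0 (x1, x2, j). f y) = (\<Sum>x\<in>steps \<times> steps \<times> {..<s0}. f ((\<lambda>(k, l, j''). (x1 + k, x2 + l, j'')) x))"
    unfolding nbrs_eq by (rule sum.reindex[OF inj, unfolded o_def])
  also have "\<dots> = (\<Sum>k\<in>steps. \<Sum>l\<in>steps. \<Sum>j''<s0. f (x1 + k, x2 + l, j''))"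
    by (subst sum_prod3) auto
  finally show ?thesis .
qed
lemma trans_prob_step: "k \<in> steps \<Longrightarrow> l \<in> steps \<Longrightarrow> j < s0 \<Longrightarrow> j'' < s0 \<Longrightarrow>
   trans_prob A s0 (x1, x2, j) (x1 + k, x2 + l, j'') = A k l j j''"
  unfolding trans_prob_def by simp

lemma trans_prob_zero: "\<not> j < s0 \<Longrightarrow> trans_prob A s0 (x1, x2, j) y = 0"
  unfolding trans_prob_def by (auto split: prod.splits)

lemma npow_bound:
  assumes Anonneg: "\<And>k l i j. A k l i j \<ge> 0"
    and P0: "\<And>y y'. 0 \<le> P y y'" and P1: "\<And>y y'. P y y' \<le> trans_prob A s0 y y'"
    and j': "j' < s0"
  shows "npow s0 P n (x1, x2, j) (x1', x2', j') * exp (a * of_int (x1' - x1) + b * of_int (x2' - x2))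
          \<le> mp s0 (Mt A a b) n j j'"
proof (induction n arbitrary: x1 x2 j)
  case 0
  then show ?case by auto
next
  case (Suc n)
  define E where "E = (\<lambda>x1 x2. exp (a * of_int (x1' - x1) + b * of_int (x2' - x2)))"
  show ?case
  proof (cases "j < s0")
    case False
    have "P (x1, x2, j) y = 0" for y using P0[of "(x1, x2, j)" y] P1[of "(x1, x2, j)" y]
      trans_prob_zero[OF False] by simp
    then have z: "npow s0 P (Suc n) (x1, x2, j) (x1', x2', j') = 0" by simp
    show ?thesis unfolding z mult_zero_left by (rule mp_nonneg, rule Mt_nonneg, rule Anonneg)
  next
    case True
    have Esplit: "E x1 x2 = E (x1 + k) (x2 + l) * exp (of_int k * a + of_int l * b)" for k l
      unfolding E_def exp_add[symmetric] by (simp add: algebra_simps)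
    have "npow s0 P (Suc n) (x1, x2, j) (x1', x2', j') * E x1 x2
       = (\<Sum>k\<in>steps. \<Sum>l\<in>steps. \<Sum>j''<s0. P (x1, x2, j) (x1 + k, x2 + l, j'') *
            npow s0 P n (x1 + k, x2 + l, j'') (x1', x2', j')) * E x1 x2"
      by (simp add: sum_nbrs)
    also have "\<dots> = (\<Sum>k\<in>steps. \<Sum>l\<in>steps. \<Sum>j''<s0. P (x1, x2, j) (x1 + k, x2 + l, j'') *
            npow s0 P n (x1 + k, x2 + l, j'') (x1', x2', j') * E x1 x2)"
      by (simp add: sum_distrib_right)
    also have "\<dots> = (\<Sum>k\<in>steps. \<Sum>l\<in>steps. \<Sum>j''<s0. P (x1, x2, j) (x1 + k, x2 + l, j'') *
            (npow s0 P n (x1 + k, x2 + l, j'') (x1', x2', j') * E (x1 + k) (x2 + l)) * exp (of_int k * a + of_int l * b))"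
    proof (intro sum.cong refl)
      fix k l j''
      show "P (x1, x2, j) (x1 + k, x2 + l, j'') * npow s0 P n (x1 + k, x2 + l, j'') (x1', x2', j') * E x1 x2 =
         P (x1, x2, j) (x1 + k, x2 + l, j'') *
            (npow s0 P n (x1 + k, x2 + l, j'') (x1', x2', j') * E (x1 + k) (x2 + l)) * exp (of_int k * a + of_int l * b)"
        by (subst Esplit[of k l]) (simp only: mult_ac)
    qed
    also have "\<dots> \<le> (\<Sum>k\<in>steps. \<Sum>l\<in>steps. \<Sum>j''<s0. A k l j j'' * mp s0 (Mt A a b) n j'' j' * exp (of_int k * a + of_int l * b))"
    proof (intro sum_mono)
      fix k l j'' assume k: "k \<in> steps" and l: "l \<in> steps" and j'': "j'' \<in> {..<s0}"
      have "P (x1, x2, j) (x1 + k, x2 + l, j'') \<le> A k l j j''"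
        using P1[of "(x1, x2, j)" "(x1 + k, x2 + l, j'')"] trans_prob_step[OF k l True] j'' by simp
      moreover have "npow s0 P n (x1 + k, x2 + l, j'') (x1', x2', j') * E (x1 + k) (x2 + l) \<le> mp s0 (Mt A a b) n j'' j'"
        using Suc[of "x1 + k" "x2 + l" j''] by (simp add: E_def)
      moreover have "npow s0 P n (x1 + k, x2 + l, j'') (x1', x2', j') \<ge> 0"
        using P0 by (rule npow_nonneg)
      ultimately show "P (x1, x2, j) (x1 + k, x2 + l, j'') *
            (npow s0 P n (x1 + k, x2 + l, j'') (x1', x2', j') * E (x1 + k) (x2 + l)) * exp (of_int k * a + of_int l * b)
           \<le> A k l j j'' * mp s0 (Mt A a b) n j'' j' * exp (of_int k * a + of_int l * b)"
        using P0 Anonneg by (intro mult_right_mono mult_mono) (auto simp: E_def)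
    qed
    also have "\<dots> = (\<Sum>k\<in>steps. \<Sum>j''<s0. \<Sum>l\<in>steps. A k l j j'' * mp s0 (Mt A a b) n j'' j' * exp (of_int k * a + of_int l * b))"
      by (rule sum.cong[OF refl], rule sum.swap)
    also have "\<dots> = (\<Sum>j''<s0. \<Sum>k\<in>steps. \<Sum>l\<in>steps. A k l j j'' * mp s0 (Mt A a b) n j'' j' * exp (of_int k * a + of_int l * b))"
      by (rule sum.swap)
    also have "\<dots> = (\<Sum>j''<s0. Mt A a b j j'' * mp s0 (Mt A a b) n j'' j')"
      unfolding Mt_def sum_distrib_right by (intro sum.cong refl) (simp only: mult_ac)
    also have "\<dots> = mp s0 (Mt A a b) (Suc n) j j'"
      by simp
    finally show ?thesis by (simp add: E_def)
  qed
qed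

lemma amgm_powr:
  fixes a b s :: real
  assumes "0 \<le> a" "0 \<le> b" "0 < s" "s < 1"
  shows "a powr s * b powr (1 - s) \<le> s * a + (1 - s) * b"
proof (cases "a = 0 \<or> b = 0")
  case True
  then show ?thesis using assms by auto
next
  case False
  then show ?thesis using assms Youngs_inequality_0[of s "1 - s" a b] by auto
qed

lemma holder_sum:
  fixes f g :: "'a \<Rightarrow> real"
  assumes S: "finite S" and f: "\<And>x. x \<in> S \<Longrightarrow> 0 \<le> f x" and g: "\<And>x. x \<in> S \<Longrightarrow> 0 \<le> g x"
    and s: "0 < s" "s < 1"
  shows "(\<Sum>x\<in>S. f x powr s * g x powr (1 - s)) \<le> (\<Sum>x\<in>S. f x) powr s * (\<Sum>x\<in>S. g x) powr (1 - s)"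
proof -
  define F where "F = (\<Sum>x\<in>S. f x)"
  define G where "G = (\<Sum>x\<in>S. g x)"
  have F0: "F \<ge> 0" unfolding F_def using f by (simp add: sum_nonneg)
  have G0: "G \<ge> 0" unfolding G_def using g by (simp add: sum_nonneg)
  show ?thesis
  proof (cases "F = 0 \<or> G = 0")
    case True
    then have "\<forall>x\<in>S. f x = 0 \<or> g x = 0"
      using sum_nonneg_eq_0_iff[OF S] f g unfolding F_def G_def by blast
    then have "(\<Sum>x\<in>S. f x powr s * g x powr (1 - s)) = 0"
      by (intro sum.neutral) auto
    then show ?thesis by simp
  next
    case False
    then have Fp: "F > 0" and Gp: "G > 0" using F0 G0 by auto
    have "(\<Sum>x\<in>S. f x powr s * g x powr (1 - s))
        = (\<Sum>x\<in>S. F powr s * G powr (1 - s) * ((f x / F) powr s * (g x / G) powr (1 - s)))"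
    proof (intro sum.cong refl)
      fix x assume x: "x \<in> S"
      show "f x powr s * g x powr (1 - s) = F powr s * G powr (1 - s) * ((f x / F) powr s * (g x / G) powr (1 - s))"
        using Fp Gp f[OF x] g[OF x] by (simp add: powr_divide field_simps)
    qed
    also have "\<dots> \<le> (\<Sum>x\<in>S. F powr s * G powr (1 - s) * (s * (f x / F) + (1 - s) * (g x / G)))"
      using f g Fp Gp s by (intro sum_mono mult_left_mono amgm_powr) auto
    also have "\<dots> = F powr s * G powr (1 - s) * (s * (\<Sum>x\<in>S. f x) / F + (1 - s) * (\<Sum>x\<in>S. g x) / G)"
      by (simp add: sum_distrib_left sum.distrib sum_divide_distrib[symmetric] field_simps)
    also have "\<dots> = F powr s * G powr (1 - s)"
      using Fp Gp unfolding F_def[symmetric] G_def[symmetric] by simp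
    finally show ?thesis unfolding F_def G_def .
  qed
qed

lemma Mt_interp:
  assumes A: "\<And>k l i j. A k l i j \<ge> 0" and s: "0 < s" "s < 1"
  shows "Mt A (s * a1 + (1 - s) * a2) (s * b1 + (1 - s) * b2) i j
     \<le> Mt A a1 b1 i j powr s * Mt A a2 b2 i j powr (1 - s)"
proof -
  have pt: "exp (of_int k * (s * a1 + (1 - s) * a2) + of_int l * (s * b1 + (1 - s) * b2)) * A k l i j
      = (exp (of_int k * a1 + of_int l * b1) * A k l i j) powr s * (exp (of_int k * a2 + of_int l * b2) * A k l i j) powr (1 - s)" for k l
  proof (cases "A k l i j = 0")
    case True then show ?thesis by simp
  next
    case False
    then have Ap: "A k l i j > 0" using A[of k l i j] by simp
    have "(exp (of_int k * a1 + of_int l * b1) * A k l i j) powr s * (exp (of_int k * a2 + of_int l * b2) * A k l i j) powr (1 - s)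
        = exp (s * (of_int k * a1 + of_int l * b1)) * exp ((1 - s) * (of_int k * a2 + of_int l * b2)) * (A k l i j powr s * A k l i j powr (1 - s))"
      using Ap by (simp add: powr_def ln_mult distrib_left exp_add mult_ac)
    also have "A k l i j powr s * A k l i j powr (1 - s) = A k l i j"
      using Ap by (simp add: powr_add[symmetric])
    finally show ?thesis by (simp add: exp_add[symmetric] algebra_simps)
  qed
  have "Mt A (s * a1 + (1 - s) * a2) (s * b1 + (1 - s) * b2) i j
      = (\<Sum>k\<in>steps. \<Sum>l\<in>steps. (exp (of_int k * a1 + of_int l * b1) * A k l i j) powr s * (exp (of_int k * a2 + of_int l * b2) * A k l i j) powr (1 - s))"
    unfolding Mt_def pt ..
  also have "\<dots> \<le> (\<Sum>k\<in>steps. (\<Sum>l\<in>steps. exp (of_int k * a1 + of_int l * b1) * A k l i j) powr s * (\<Sum>l\<in>steps. exp (of_int k * a2 + of_int l * b2) * A k l i j) powr (1 - s))"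
    using A s by (intro sum_mono holder_sum) auto
  also have "\<dots> \<le> Mt A a1 b1 i j powr s * Mt A a2 b2 i j powr (1 - s)"
    unfolding Mt_def using A s by (intro holder_sum) (auto intro!: sum_nonneg)
  finally show ?thesis .
qed

lemma mp_interp:
  assumes A: "\<And>k l i j. A k l i j \<ge> 0" and s: "0 < s" "s < 1"
  shows "mp s0 (Mt A (s * a1 + (1 - s) * a2) (s * b1 + (1 - s) * b2)) n i j
     \<le> mp s0 (Mt A a1 b1) n i j powr s * mp s0 (Mt A a2 b2) n i j powr (1 - s)"
proof (induction n arbitrary: i)
  case 0
  then show ?case by simp
next
  case (Suc n)
  let ?M = "Mt A (s * a1 + (1 - s) * a2) (s * b1 + (1 - s) * b2)"
  let ?M1 = "Mt A a1 b1" and ?M2 = "Mt A a2 b2"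
  have "mp s0 ?M (Suc n) i j = (\<Sum>m<s0. ?M i m * mp s0 ?M n m j)" by simp
  also have "\<dots> \<le> (\<Sum>m<s0. (?M1 i m powr s * ?M2 i m powr (1 - s)) * (mp s0 ?M1 n m j powr s * mp s0 ?M2 n m j powr (1 - s)))"
    using Suc Mt_interp[OF A s] by (intro sum_mono mult_mono) (auto intro!: Mt_nonneg mp_nonneg A)
  also have "\<dots> = (\<Sum>m<s0. (?M1 i m * mp s0 ?M1 n m j) powr s * (?M2 i m * mp s0 ?M2 n m j) powr (1 - s))"
    using A by (intro sum.cong refl) (simp add: powr_mult Mt_nonneg mp_nonneg mult_ac)
  also have "\<dots> \<le> (\<Sum>m<s0. ?M1 i m * mp s0 ?M1 n m j) powr s * (\<Sum>m<s0. ?M2 i m * mp s0 ?M2 n m j) powr (1 - s)"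
    using A s by (intro holder_sum) (auto intro!: Mt_nonneg mp_nonneg mult_nonneg_nonneg)
  finally show ?case by simp
qed
lemma mp_rowsum:
  assumes "\<And>i. i < s0 \<Longrightarrow> (\<Sum>j<s0. M i j) = 1" "i < s0"
  shows "(\<Sum>j<s0. mp s0 M n i j) = 1"
  using assms(2)
proof (induction n arbitrary: i)
  case 0
  then show ?case by simp
next
  case (Suc n)
  have "(\<Sum>j<s0. mp s0 M (Suc n) i j) = (\<Sum>j<s0. \<Sum>m<s0. M i m * mp s0 M n m j)"
    by simp
  also have "\<dots> = (\<Sum>m<s0. \<Sum>j<s0. M i m * mp s0 M n m j)"
    by (rule sum.swap)
  also have "\<dots> = (\<Sum>m<s0. M i m * (\<Sum>j<s0. mp s0 M n m j))"
    by (simp add: sum_distrib_left)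
  also have "\<dots> = (\<Sum>m<s0. M i m)" using Suc by simp
  finally show ?case using assms(1) Suc by simp
qed

lemma osc_contract:
  fixes W :: "nat \<Rightarrow> nat \<Rightarrow> real"
  assumes rows: "\<And>i. i < s0 \<Longrightarrow> (\<Sum>j<s0. W i j) = 1"
    and low: "\<And>i j. i < s0 \<Longrightarrow> j < s0 \<Longrightarrow> W i j \<ge> \<delta>"
    and d0: "\<delta> \<ge> 0"
    and osc: "\<And>j j'. j < s0 \<Longrightarrow> j' < s0 \<Longrightarrow> v j - v j' \<le> D"
    and i: "i < s0" and i': "i' < s0"
  shows "(\<Sum>j<s0. W i j * v j) - (\<Sum>j<s0. W i' j * v j) \<le> (1 - real s0 * \<delta>) * D"
proof -
  have ne: "v ` {..<s0} \<noteq> {}" using i by auto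
  define lo where "lo = Min (v ` {..<s0})"
  have lo: "j < s0 \<Longrightarrow> lo \<le> v j" for j unfolding lo_def by (intro Min_le) auto
  obtain j0 where j0: "j0 < s0" "lo = v j0" unfolding lo_def using Min_in[OF _ ne] by auto
  have hi: "j < s0 \<Longrightarrow> v j \<le> lo + D" for j using osc[of j j0] j0 by simp
  define S where "S = (\<Sum>j<s0. v j)"
  have split: "(\<Sum>j<s0. W k j * v j) = (\<Sum>j<s0. (W k j - \<delta>) * v j) + \<delta> * S" for k
    unfolding S_def by (simp add: algebra_simps sum.distrib sum_distrib_left sum_subtractf)
  have s1: "(\<Sum>j<s0. W k j - \<delta>) = 1 - real s0 * \<delta>" if "k < s0" for k
    using rows[OF that] by (simp add: sum_subtractf)
  have "(\<Sum>j<s0. (W i j - \<delta>) * v j) \<le> (\<Sum>j<s0. (W i j - \<delta>) * (lo + D))"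
    using low i hi by (intro sum_mono mult_left_mono) auto
  also have "\<dots> = (1 - real s0 * \<delta>) * (lo + D)" unfolding sum_distrib_right[symmetric] using s1[OF i] by simp
  finally have up: "(\<Sum>j<s0. (W i j - \<delta>) * v j) \<le> (1 - real s0 * \<delta>) * (lo + D)" .
  have "(1 - real s0 * \<delta>) * lo = (\<Sum>j<s0. (W i' j - \<delta>) * lo)" unfolding sum_distrib_right[symmetric] using s1[OF i'] by simp
  also have "\<dots> \<le> (\<Sum>j<s0. (W i' j - \<delta>) * v j)"
    using low i' lo by (intro sum_mono mult_left_mono) auto
  finally have dn: "(1 - real s0 * \<delta>) * lo \<le> (\<Sum>j<s0. (W i' j - \<delta>) * v j)" .
  show ?thesis using up dn split[of i] split[of i'] by (simp add: algebra_simps)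
qed

locale drift_setting =
  fixes s0 :: nat and A :: "int \<Rightarrow> int \<Rightarrow> nat \<Rightarrow> nat \<Rightarrow> real" and pi :: "nat \<Rightarrow> real" and u1 u2 :: real
  assumes s0_pos: "s0 > 0"
    and A_nonneg: "\<And>k l i j. A k l i j \<ge> 0"
    and A_stoch: "\<And>i. i < s0 \<Longrightarrow> (\<Sum>k\<in>steps. \<Sum>l\<in>steps. \<Sum>j<s0. A k l i j) = 1"
    and pi_nonneg: "\<And>j. j < s0 \<Longrightarrow> pi j \<ge> 0"
    and pi_sum: "(\<Sum>j<s0. pi j) = 1"
    and pi_stat: "\<And>j'. j' < s0 \<Longrightarrow> (\<Sum>i<s0. pi i * (\<Sum>k\<in>steps. \<Sum>l\<in>steps. A k l i j')) = pi j'"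
    and irr: "\<And>i j. i < s0 \<Longrightarrow> j < s0 \<Longrightarrow> \<exists>n. mp s0 (Mt A 0 0) n i j > 0"
    and dbound: "\<And>k l. k \<in> steps \<Longrightarrow> l \<in> steps \<Longrightarrow> \<bar>of_int k * u1 + of_int l * u2\<bar> \<le> 1"
    and drift: "(\<Sum>i<s0. pi i * (\<Sum>j<s0. \<Sum>k\<in>steps. \<Sum>l\<in>steps. (of_int k * u1 + of_int l * u2) * A k l i j)) < 0"
begin

definition P0 where "P0 i j = (\<Sum>k\<in>steps. \<Sum>l\<in>steps. A k l i j)"
definition Q where "Q i j = (if i = j then 1/2 else 0) + P0 i j / 2"
definition dr where "dr i = (\<Sum>j<s0. \<Sum>k\<in>steps. \<Sum>l\<in>steps. (of_int k * u1 + of_int l * u2) * A k l i j)"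
definition a where "a = (\<Sum>i<s0. pi i * dr i)"

lemma a_neg: "a < 0" using drift unfolding a_def dr_def .

lemma Mt00: "Mt A 0 0 = P0" unfolding Mt_def P0_def by (intro ext) simp

lemma P0_nonneg: "P0 i j \<ge> 0" unfolding P0_def using A_nonneg by (auto intro!: sum_nonneg)
lemma Q_nonneg: "Q i j \<ge> 0" unfolding Q_def using P0_nonneg[of i j] by simp

lemma sumA_swap: "(\<Sum>j<s0. \<Sum>k\<in>steps. \<Sum>l\<in>steps. f k l j) = (\<Sum>k\<in>steps. \<Sum>l\<in>steps. \<Sum>j<s0. f k l j)"
proof -
  have "(\<Sum>j<s0. \<Sum>k\<in>steps. \<Sum>l\<in>steps. f k l j) = (\<Sum>k\<in>steps. \<Sum>j<s0. \<Sum>l\<in>steps. f k l j)"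
    by (rule sum.swap)
  also have "\<dots> = (\<Sum>k\<in>steps. \<Sum>l\<in>steps. \<Sum>j<s0. f k l j)"
    by (rule sum.cong[OF refl], rule sum.swap)
  finally show ?thesis .
qed

lemma P0_rows: "i < s0 \<Longrightarrow> (\<Sum>j<s0. P0 i j) = 1"
proof -
  assume i: "i < s0"
  have "(\<Sum>j<s0. P0 i j) = (\<Sum>k\<in>steps. \<Sum>l\<in>steps. \<Sum>j<s0. A k l i j)"
    unfolding P0_def by (rule sumA_swap)
  then show ?thesis using A_stoch[OF i] by simp
qed

lemma Q_rows: "i < s0 \<Longrightarrow> (\<Sum>j<s0. Q i j) = 1"
  unfolding Q_def using P0_rows by (simp add: sum.distrib sum_divide_distrib[symmetric])

lemma Q_apply: "i < s0 \<Longrightarrow> (\<Sum>j<s0. Q i j * v j) = v i / 2 + (\<Sum>j<s0. P0 i j * v j) / 2"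
  unfolding Q_def by (simp add: distrib_right sum.distrib sum_divide_distrib[symmetric] if_distrib[of "\<lambda>x. x * _"] cong: if_cong)

lemma pi_stat_P0: "j < s0 \<Longrightarrow> (\<Sum>i<s0. pi i * P0 i j) = pi j"
  using pi_stat unfolding P0_def by simp

lemma pi_stat_Q: "j < s0 \<Longrightarrow> (\<Sum>i<s0. pi i * Q i j) = pi j"
proof -
  assume j: "j < s0"
  have "(\<Sum>i<s0. pi i * Q i j) = (\<Sum>i<s0. (if i = j then pi i / 2 else 0)) + (\<Sum>i<s0. pi i * P0 i j) / 2"
  proof -
    have "pi i * Q i j = (if i = j then pi i / 2 else 0) + pi i * P0 i j / 2" for i
      unfolding Q_def by (simp add: algebra_simps)
    then show ?thesis by (simp add: sum.distrib sum_divide_distrib[symmetric])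
  qed
  also have "\<dots> = pi j" using j pi_stat_P0[OF j] by simp
  finally show ?thesis .
qed

lemma mpQ_lower: "i < s0 \<Longrightarrow> n \<le> L \<Longrightarrow> mp s0 Q L i j \<ge> (1/2)^L * mp s0 P0 n i j"
proof (induction L arbitrary: n i j)
  case 0
  then show ?case by simp
next
  case (Suc L)
  have eq: "mp s0 Q (Suc L) i j = mp s0 Q L i j / 2 + (\<Sum>m<s0. P0 i m * mp s0 Q L m j) / 2"
    using Q_apply[OF Suc.prems(1)] by simp
  have nn1: "0 \<le> (\<Sum>m<s0. P0 i m * mp s0 Q L m j)"
    by (intro sum_nonneg mult_nonneg_nonneg P0_nonneg mp_nonneg Q_nonneg)
  show ?case
  proof (cases "n \<le> L")
    case True
    have "(1/2)^Suc L * mp s0 P0 n i j = ((1/2)^L * mp s0 P0 n i j) / 2" by simp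
    also have "\<dots> \<le> mp s0 Q L i j / 2" using Suc.IH[OF Suc.prems(1) True] by simp
    finally show ?thesis using eq nn1 by simp
  next
    case False
    then have n: "n = Suc L" using Suc.prems by simp
    have "(1/2)^Suc L * mp s0 P0 n i j = (\<Sum>m<s0. P0 i m * ((1/2)^L * mp s0 P0 L m j)) / 2"
      unfolding n by (simp add: sum_distrib_left sum_divide_distrib[symmetric] mult_ac)
    also have "\<dots> \<le> (\<Sum>m<s0. P0 i m * mp s0 Q L m j) / 2"
      using Suc.IH[of _ L j] by (intro divide_right_mono sum_mono mult_left_mono P0_nonneg) auto
    finally show ?thesis using eq mp_nonneg[of Q, OF Q_nonneg, of s0 L i j] by simp
  qed
qed

lemma Q_positive: "\<exists>L \<delta>. \<delta> > 0 \<and> (\<forall>i<s0. \<forall>j<s0. mp s0 Q L i j \<ge> \<delta>)"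
proof -
  have "\<forall>p\<in>{..<s0} \<times> {..<s0}. \<exists>n. mp s0 P0 n (fst p) (snd p) > 0"
    using irr unfolding Mt00 by auto
  then obtain N where N: "\<And>p. p \<in> {..<s0} \<times> {..<s0} \<Longrightarrow> mp s0 P0 (N p) (fst p) (snd p) > 0"
    by metis
  define PS where "PS = {..<s0} \<times> {..<s0}"
  have fin: "finite PS" and ne: "PS \<noteq> {}" unfolding PS_def using s0_pos by auto
  define L where "L = Max (N ` PS)"
  define \<delta> where "\<delta> = Min ((\<lambda>p. (1/2)^L * mp s0 P0 (N p) (fst p) (snd p)) ` PS)"
  have "\<delta> \<in> (\<lambda>p. (1/2)^L * mp s0 P0 (N p) (fst p) (snd p)) ` PS"
    unfolding \<delta>_def using fin ne by (intro Min_in) auto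
  then have dpos: "\<delta> > 0" using N unfolding PS_def by auto
  have "mp s0 Q L i j \<ge> \<delta>" if "i < s0" "j < s0" for i j
  proof -
    have p: "(i, j) \<in> PS" using that unfolding PS_def by auto
    have "\<delta> \<le> (1/2)^L * mp s0 P0 (N (i, j)) i j"
      unfolding \<delta>_def using fin p by (intro Min_le) (auto intro: image_eqI[of _ _ "(i,j)"])
    also have "\<dots> \<le> mp s0 Q L i j"
      using mpQ_lower[OF that(1), of "N (i,j)" L j] fin p unfolding L_def by auto
    finally show ?thesis .
  qed
  then show ?thesis using dpos by blast
qed

end


context drift_setting begin

primrec vp :: "nat \<Rightarrow> nat \<Rightarrow> real" where
  "vp 0 = dr"
| "vp (Suc m) = (\<lambda>i. \<Sum>j<s0. Q i j * vp m j)"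

lemma dr_bound: "i < s0 \<Longrightarrow> \<bar>dr i\<bar> \<le> 1"
proof -
  assume i: "i < s0"
  have "\<bar>dr i\<bar> \<le> (\<Sum>j<s0. \<Sum>k\<in>steps. \<Sum>l\<in>steps. \<bar>(of_int k * u1 + of_int l * u2) * A k l i j\<bar>)"
    unfolding dr_def by (rule order_trans[OF sum_abs], intro sum_mono order_trans[OF sum_abs]) simp
  also have "\<dots> \<le> (\<Sum>j<s0. \<Sum>k\<in>steps. \<Sum>l\<in>steps. A k l i j)"
  proof (intro sum_mono)
    fix j k l assume "k \<in> steps" "l \<in> steps"
    then show "\<bar>(of_int k * u1 + of_int l * u2) * A k l i j\<bar> \<le> A k l i j"
      using dbound[of k l] A_nonneg[of k l i j] by (simp add: abs_mult mult_left_le_one_le)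
  qed
  also have "\<dots> = (\<Sum>k\<in>steps. \<Sum>l\<in>steps. \<Sum>j<s0. A k l i j)" by (rule sumA_swap)
  also have "\<dots> = 1" using A_stoch[OF i] by simp
  finally show ?thesis .
qed

lemma vp_bound: "i < s0 \<Longrightarrow> \<bar>vp m i\<bar> \<le> 1"
proof (induction m arbitrary: i)
  case 0
  then show ?case using dr_bound by simp
next
  case (Suc m)
  have "\<bar>vp (Suc m) i\<bar> \<le> (\<Sum>j<s0. \<bar>Q i j * vp m j\<bar>)" by (simp add: sum_abs)
  also have "\<dots> \<le> (\<Sum>j<s0. Q i j)"
  proof (intro sum_mono)
    fix j assume "j \<in> {..<s0}"
    then show "\<bar>Q i j * vp m j\<bar> \<le> Q i j"
      using Suc.IH[of j] Q_nonneg[of i j] by (simp add: abs_mult mult_left_le)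
  qed
  also have "\<dots> = 1" using Q_rows Suc.prems by simp
  finally show ?case .
qed

lemma vp_add: "i < s0 \<Longrightarrow> vp (m + L) i = (\<Sum>j<s0. mp s0 Q L i j * vp m j)"
proof (induction L arbitrary: i)
  case 0
  then show ?case by (simp add: sum_delta_mult)
next
  case (Suc L)
  have "vp (m + Suc L) i = (\<Sum>j<s0. Q i j * (\<Sum>j'<s0. mp s0 Q L j j' * vp m j'))"
    using Suc.IH by simp
  also have "\<dots> = (\<Sum>j<s0. \<Sum>j'<s0. Q i j * mp s0 Q L j j' * vp m j')"
    by (simp add: sum_distrib_left mult.assoc)
  also have "\<dots> = (\<Sum>j'<s0. \<Sum>j<s0. Q i j * mp s0 Q L j j' * vp m j')"
    by (rule sum.swap)
  also have "\<dots> = (\<Sum>j'<s0. mp s0 Q (Suc L) i j' * vp m j')"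
    by (simp add: sum_distrib_right)
  finally show ?case .
qed

lemma vp_pi: "(\<Sum>i<s0. pi i * vp m i) = a"
proof (induction m)
  case 0
  then show ?case by (simp add: a_def)
next
  case (Suc m)
  have "(\<Sum>i<s0. pi i * vp (Suc m) i) = (\<Sum>i<s0. \<Sum>j<s0. pi i * Q i j * vp m j)"
    by (simp add: sum_distrib_left mult.assoc)
  also have "\<dots> = (\<Sum>j<s0. \<Sum>i<s0. pi i * Q i j * vp m j)"
    by (rule sum.swap)
  also have "\<dots> = (\<Sum>j<s0. (\<Sum>i<s0. pi i * Q i j) * vp m j)"
    by (simp add: sum_distrib_right)
  also have "\<dots> = (\<Sum>j<s0. pi j * vp m j)"
    using pi_stat_Q by simp
  finally show ?case using Suc by simp
qed

lemma vp_osc: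
  assumes L: "\<And>i j. i < s0 \<Longrightarrow> j < s0 \<Longrightarrow> mp s0 Q L i j \<ge> \<delta>" and d0: "\<delta> \<ge> 0"
  shows "i < s0 \<Longrightarrow> i' < s0 \<Longrightarrow> vp (k * L) i - vp (k * L) i' \<le> (1 - real s0 * \<delta>)^k * 2"
proof (induction k arbitrary: i i')
  case 0
  then show ?case using vp_bound[of i 0] vp_bound[of i' 0] by simp
next
  case (Suc k)
  have e: "vp (Suc k * L) j = (\<Sum>j'<s0. mp s0 Q L j j' * vp (k * L) j')" if "j < s0" for j
    using vp_add[OF that, of "k * L" L] by (simp add: add.commute)
  have "(\<Sum>j'<s0. mp s0 Q L i j' * vp (k * L) j') - (\<Sum>j'<s0. mp s0 Q L i' j' * vp (k * L) j')
      \<le> (1 - real s0 * \<delta>) * ((1 - real s0 * \<delta>)^k * 2)"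
    by (rule osc_contract[OF mp_rowsum[OF Q_rows] L d0 Suc.IH Suc.prems])
  then show ?case using e[OF Suc.prems(1)] e[OF Suc.prems(2)] by simp
qed

lemma exists_N: "\<exists>N. \<forall>i<s0. vp N i \<le> a / 2"
proof -
  obtain L \<delta> where dpos: "\<delta> > 0" and L: "\<And>i j. i < s0 \<Longrightarrow> j < s0 \<Longrightarrow> mp s0 Q L i j \<ge> \<delta>"
    using Q_positive by blast
  have "1 - real s0 * \<delta> < 1" using dpos s0_pos by simp
  then obtain k where k: "(1 - real s0 * \<delta>)^k < - a / 4"
    using real_arch_pow_inv[of "- a / 4" "1 - real s0 * \<delta>"] a_neg by auto
  define N where "N = k * L"
  have ne: "vp N ` {..<s0} \<noteq> {}" using s0_pos by auto
  define m where "m = Min (vp N ` {..<s0})"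
  obtain i0 where i0: "i0 < s0" "m = vp N i0" unfolding m_def using Min_in[OF _ ne] by auto
  have mle: "i < s0 \<Longrightarrow> m \<le> vp N i" for i unfolding m_def by (intro Min_le) auto
  have "m = (\<Sum>i<s0. pi i * m)" using pi_sum by (simp add: sum_distrib_right[symmetric])
  also have "\<dots> \<le> (\<Sum>i<s0. pi i * vp N i)" using pi_nonneg mle by (intro sum_mono mult_left_mono) auto
  also have "\<dots> = a" by (rule vp_pi)
  finally have "m \<le> a" .
  have "vp N i \<le> a / 2" if "i < s0" for i
    using vp_osc[OF L, of i i0 k] dpos that i0 k \<open>m \<le> a\<close> unfolding N_def by simp
  then show ?thesis by blast
qed

definition wv :: "nat \<Rightarrow> nat \<Rightarrow> real" where "wv N i = (\<Sum>m<N. vp m i) / 2"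

lemma P0_apply: "i < s0 \<Longrightarrow> (\<Sum>j<s0. P0 i j * v j) = 2 * (\<Sum>j<s0. Q i j * v j) - v i"
  using Q_apply[of i v] by simp

lemma wv_eq: "i < s0 \<Longrightarrow> dr i + (\<Sum>j<s0. P0 i j * wv N j) - wv N i = vp N i"
proof -
  assume i: "i < s0"
  have "(\<Sum>j<s0. P0 i j * wv N j) = (\<Sum>m<N. \<Sum>j<s0. P0 i j * vp m j) / 2"
    unfolding wv_def by (simp add: sum_distrib_left sum_divide_distrib[symmetric] sum.swap[of _ "{..<N}"])
  also have "\<dots> = (\<Sum>m<N. 2 * vp (Suc m) i - vp m i) / 2"
    using P0_apply[OF i] by simp
  finally have "(\<Sum>j<s0. P0 i j * wv N j) = (\<Sum>m<N. vp (Suc m) i) - wv N i"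
    unfolding wv_def by (simp add: sum_subtractf sum_distrib_left[symmetric])
  moreover have "(\<Sum>m<N. vp (Suc m) i) - (\<Sum>m<N. vp m i) = vp N i - vp 0 i"
    using sum_lessThan_telescope[of "\<lambda>m. vp m i" N] by (simp add: sum_subtractf)
  ultimately show ?thesis unfolding wv_def by simp
qed

lemma wv_bound: "i < s0 \<Longrightarrow> \<bar>wv N i\<bar> \<le> real N"
proof -
  assume i: "i < s0"
  have "\<bar>\<Sum>m<N. vp m i\<bar> \<le> (\<Sum>m<N. 1)" using vp_bound[OF i] by (intro order_trans[OF sum_abs] sum_mono) auto
  then show ?thesis unfolding wv_def by simp
qed

end


lemma exp_quad_bound: fixes x :: real assumes "\<bar>x\<bar> \<le> 1" shows "exp x \<le> 1 + x + x\<^sup>2"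
proof (cases "x \<ge> 0")
  case True
  then show ?thesis using exp_bound[of x] assms by simp
next
  case False
  define y where "y = - x"
  have y: "0 < y" "y \<le> 1" using False assms unfolding y_def by auto
  have "exp y \<ge> 1 + y" by (rule exp_ge_add_one_self)
  then have "exp x \<le> 1 / (1 + y)" using y unfolding y_def by (simp add: exp_minus field_simps)
  also have "\<dots> \<le> 1 - y + y\<^sup>2"
    using y by (simp add: field_simps power2_eq_square)
  finally show ?thesis unfolding y_def by simp
qed

context drift_setting begin

lemma sumA1: "i < s0 \<Longrightarrow> (\<Sum>j<s0. \<Sum>k\<in>steps. \<Sum>l\<in>steps. A k l i j) = 1"
proof -
  assume i: "i < s0"
  have "(\<Sum>j<s0. \<Sum>k\<in>steps. \<Sum>l\<in>steps. A k l i j) = (\<Sum>k\<in>steps. \<Sum>l\<in>steps. \<Sum>j<s0. A k l i j)"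
    by (rule sumA_swap)
  then show ?thesis using A_stoch[OF i] by simp
qed

lemma a_abs: "\<bar>a\<bar> \<le> 1"
proof -
  have "\<bar>a\<bar> \<le> (\<Sum>i<s0. \<bar>pi i * dr i\<bar>)" unfolding a_def by (rule sum_abs)
  also have "\<dots> \<le> (\<Sum>i<s0. pi i)"
  proof (intro sum_mono)
    fix i assume "i \<in> {..<s0}"
    then show "\<bar>pi i * dr i\<bar> \<le> pi i" using dr_bound[of i] pi_nonneg[of i] by (simp add: abs_mult mult_left_le)
  qed
  finally show ?thesis using pi_sum by simp
qed

lemma Mu_bound:
  fixes N :: nat and W K t :: real
  defines "u \<equiv> \<lambda>j. 1 + t * wv N j"
  assumes W: "\<And>j. j < s0 \<Longrightarrow> \<bar>wv N j\<bar> \<le> W" and K: "K = 1 + 2 * W"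
    and t: "0 < t" "t \<le> 1" "t * W \<le> 1/2" and i: "i < s0"
  shows "(\<Sum>j<s0. Mt A (t * u1) (t * u2) i j * u j) \<le> 1 + t * (\<Sum>j<s0. P0 i j * wv N j) + t * dr i + t\<^sup>2 * K"
proof -
  define \<delta> where "\<delta> k l = of_int k * u1 + of_int l * u2" for k l
  have tw: "\<bar>t * wv N j\<bar> \<le> 1/2" if j: "j < s0" for j
  proof -
    have "t * \<bar>wv N j\<bar> \<le> t * W" using W[OF j] t by (intro mult_left_mono) auto
    then show ?thesis using t(3) by (simp only: abs_mult abs_of_pos[OF t(1)])
  qed
  have upos: "j < s0 \<Longrightarrow> u j \<ge> 0" for j
    using abs_le_D2[OF tw[of j]] unfolding u_def by simp
  have pt: "exp (of_int k * (t * u1) + of_int l * (t * u2)) * u j \<le> u j + t * \<delta> k l + t\<^sup>2 * K"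
    if k: "k \<in> steps" and l: "l \<in> steps" and j: "j < s0" for k l j
  proof -
    have d1: "\<bar>\<delta> k l\<bar> \<le> 1" using dbound[OF k l] unfolding \<delta>_def .
    have eq: "of_int k * (t * u1) + of_int l * (t * u2) = t * \<delta> k l" unfolding \<delta>_def by (simp add: algebra_simps)
    have tb: "\<bar>t * \<delta> k l\<bar> \<le> 1" using d1 t by (simp add: abs_mult mult_le_one)
    have "(\<delta> k l)\<^sup>2 \<le> 1" using d1 by (simp add: abs_square_le_1)
    then have sq: "(t * \<delta> k l)\<^sup>2 \<le> t\<^sup>2" by (simp add: power_mult_distrib mult_left_le)
    have "exp (t * \<delta> k l) * u j \<le> (1 + t * \<delta> k l + t\<^sup>2) * u j"
      using exp_quad_bound[OF tb] sq upos[OF j] by (intro mult_right_mono) auto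
    also have "\<dots> = u j + t * \<delta> k l + t\<^sup>2 * (\<delta> k l * wv N j) + t\<^sup>2 * u j"
      unfolding u_def by (simp add: algebra_simps power2_eq_square)
    also have "\<dots> \<le> u j + t * \<delta> k l + t\<^sup>2 * W + t\<^sup>2 * (1 + W)"
    proof -
      have W0: "W \<ge> 0" using W[OF j] by simp
      have "\<bar>\<delta> k l\<bar> * \<bar>wv N j\<bar> \<le> 1 * W"
        using d1 W[OF j] W0 by (intro mult_mono) auto
      then have "\<delta> k l * wv N j \<le> W" using abs_le_D1[of "\<delta> k l * wv N j" W] by (simp add: abs_mult)
      moreover have "u j \<le> 1 + W"
      proof -
        have "t * wv N j \<le> t * \<bar>wv N j\<bar>" using t by (intro mult_left_mono) auto
        also have "\<dots> \<le> t * W" using W[OF j] t by (intro mult_left_mono) auto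
        also have "\<dots> \<le> W" using t W0 by (simp add: mult_left_le_one_le)
        finally show ?thesis unfolding u_def by simp
      qed
      ultimately show ?thesis using t by (intro add_mono mult_left_mono) auto
    qed
    also have "\<dots> = u j + t * \<delta> k l + t\<^sup>2 * K" unfolding K by (simp add: algebra_simps)
    finally show ?thesis unfolding eq .
  qed
  have "(\<Sum>j<s0. Mt A (t * u1) (t * u2) i j * u j)
      = (\<Sum>j<s0. \<Sum>k\<in>steps. \<Sum>l\<in>steps. A k l i j * (exp (of_int k * (t * u1) + of_int l * (t * u2)) * u j))"
    unfolding Mt_def sum_distrib_right by (simp only: mult_ac)
  also have "\<dots> \<le> (\<Sum>j<s0. \<Sum>k\<in>steps. \<Sum>l\<in>steps. A k l i j * (u j + t * \<delta> k l + t\<^sup>2 * K))"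
    using pt A_nonneg by (intro sum_mono mult_left_mono) auto
  also have "\<dots> = (\<Sum>j<s0. \<Sum>k\<in>steps. \<Sum>l\<in>steps. A k l i j * u j + t * (\<delta> k l * A k l i j) + t\<^sup>2 * K * A k l i j)"
    by (simp only: distrib_left mult_ac)
  also have "\<dots> = (\<Sum>j<s0. \<Sum>k\<in>steps. \<Sum>l\<in>steps. A k l i j * u j) + (\<Sum>j<s0. \<Sum>k\<in>steps. \<Sum>l\<in>steps. t * (\<delta> k l * A k l i j))
        + (\<Sum>j<s0. \<Sum>k\<in>steps. \<Sum>l\<in>steps. t\<^sup>2 * K * A k l i j)"
    by (simp only: sum.distrib)
  also have "\<dots> = (\<Sum>j<s0. P0 i j * u j) + t * (\<Sum>j<s0. \<Sum>k\<in>steps. \<Sum>l\<in>steps. \<delta> k l * A k l i j)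
        + t\<^sup>2 * K * (\<Sum>j<s0. \<Sum>k\<in>steps. \<Sum>l\<in>steps. A k l i j)"
    unfolding P0_def by (simp only: sum_distrib_left sum_distrib_right)
  also have "(\<Sum>j<s0. \<Sum>k\<in>steps. \<Sum>l\<in>steps. A k l i j) = 1"
    using sumA1[OF i] .
  also have "(\<Sum>j<s0. \<Sum>k\<in>steps. \<Sum>l\<in>steps. \<delta> k l * A k l i j) = dr i"
    unfolding dr_def \<delta>_def ..
  also have "(\<Sum>j<s0. P0 i j * u j) = 1 + t * (\<Sum>j<s0. P0 i j * wv N j)"
    unfolding u_def using P0_rows[OF i] by (simp add: algebra_simps sum.distrib sum_distrib_left)
  finally show ?thesis by simp
qed

end


context drift_setting begin

lemma theta_star: "\<exists>t C q. t > 0 \<and> 0 \<le> q \<and> q < 1 \<and>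
   (\<forall>n i j. i < s0 \<longrightarrow> j < s0 \<longrightarrow> mp s0 (Mt A (t * u1) (t * u2)) n i j \<le> C * q^n)"
proof -
  obtain N where vN: "\<And>i. i < s0 \<Longrightarrow> vp N i \<le> a / 2" using exists_N by blast
  define W where "W = real N + 1"
  define K where "K = 1 + 2 * W"
  have W: "\<And>j. j < s0 \<Longrightarrow> \<bar>wv N j\<bar> \<le> W" unfolding W_def using wv_bound[of _ N] by (smt (verit))
  have W1: "W \<ge> 1" unfolding W_def by simp
  have Kp: "K > 0" unfolding K_def using W1 by simp
  define t where "t = min (1 / (2 * W)) (- a / (4 * K))"
  have tpos: "t > 0" unfolding t_def using W1 Kp a_neg by (simp add: divide_neg_pos)
  have tW: "t * W \<le> 1/2"
  proof -
    have "t * W \<le> 1 / (2 * W) * W" unfolding t_def using W1 by (intro mult_right_mono) auto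
    then show ?thesis using W1 by simp
  qed
  have t1: "t \<le> 1"
  proof -
    have "t \<le> 1 / (2 * W)" unfolding t_def by simp
    also have "\<dots> \<le> 1" using W1 by simp
    finally show ?thesis .
  qed
  have tK: "t * K \<le> - a / 4"
  proof -
    have "t * K \<le> - a / (4 * K) * K" unfolding t_def using Kp by (intro mult_right_mono) auto
    then show ?thesis using Kp by simp
  qed
  define M where "M = Mt A (t * u1) (t * u2)"
  define u where "u j = 1 + t * wv N j" for j
  have tw: "\<bar>t * wv N j\<bar> \<le> 1/2" if j: "j < s0" for j
  proof -
    have "t * \<bar>wv N j\<bar> \<le> t * W" using W[OF j] tpos by (intro mult_left_mono) auto
    then show ?thesis using tW tpos by (simp only: abs_mult abs_of_pos[OF tpos])
  qed
  have ulo: "u j \<ge> 1/2" if "j < s0" for j using abs_le_D2[OF tw[OF that]] unfolding u_def by simp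
  have uhi: "u j \<le> 3/2" if "j < s0" for j using abs_le_D1[OF tw[OF that]] unfolding u_def by simp
  define q where "q = 1 + t * a / 8"
  have q0: "q \<ge> 0"
  proof -
    have "t * (-1) \<le> t * a" using a_abs tpos by (intro mult_left_mono) auto
    then show ?thesis unfolding q_def using t1 by simp
  qed
  have q1: "q < 1" unfolding q_def using tpos a_neg by (simp add: mult_pos_neg)
  have Mstep: "(\<Sum>j<s0. M i j * u j) \<le> q * u i" if i: "i < s0" for i
  proof -
    have "(\<Sum>j<s0. M i j * u j) \<le> 1 + t * (\<Sum>j<s0. P0 i j * wv N j) + t * dr i + t\<^sup>2 * K"
      unfolding M_def u_def by (rule Mu_bound[OF W K_def tpos t1 tW i])
    also have "\<dots> = u i + t * vp N i + t * (t * K)"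
    proof -
      have e: "dr i + (\<Sum>j<s0. P0 i j * wv N j) = vp N i + wv N i" using wv_eq[OF i, of N] by simp
      have "1 + t * (\<Sum>j<s0. P0 i j * wv N j) + t * dr i + t\<^sup>2 * K = 1 + t * (dr i + (\<Sum>j<s0. P0 i j * wv N j)) + t * (t * K)"
        by (simp add: algebra_simps power2_eq_square)
      also have "\<dots> = 1 + t * (vp N i + wv N i) + t * (t * K)" by (simp only: e)
      finally show ?thesis unfolding u_def by (simp add: algebra_simps)
    qed
    also have "\<dots> \<le> u i + t * (a / 2) + t * (- a / 4)"
      using vN[OF i] tK tpos by (intro add_mono mult_left_mono) auto
    also have "\<dots> \<le> q * u i"
    proof -
      have "0 \<le> (t * a / 8) * (u i - 2)"
        using tpos a_neg uhi[OF i] by (intro mult_nonpos_nonpos) (auto simp: mult_pos_neg mult_nonneg_nonpos less_imp_le)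
      then show ?thesis unfolding q_def by (simp add: algebra_simps)
    qed
    finally show ?thesis .
  qed
  have Mnn: "\<And>i j. M i j \<ge> 0" unfolding M_def by (rule Mt_nonneg[OF A_nonneg])
  have pw: "(\<Sum>j<s0. mp s0 M n i j * u j) \<le> q^n * u i" if "i < s0" for n i
    using that
  proof (induction n arbitrary: i)
    case 0
    then show ?case by (simp add: sum_delta_mult)
  next
    case (Suc n)
    have "(\<Sum>j<s0. mp s0 M (Suc n) i j * u j) = (\<Sum>j<s0. \<Sum>m<s0. M i m * mp s0 M n m j * u j)"
      by (simp add: sum_distrib_right)
    also have "\<dots> = (\<Sum>m<s0. \<Sum>j<s0. M i m * mp s0 M n m j * u j)" by (rule sum.swap)
    also have "\<dots> = (\<Sum>m<s0. M i m * (\<Sum>j<s0. mp s0 M n m j * u j))"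
      by (simp add: sum_distrib_left mult.assoc)
    also have "\<dots> \<le> (\<Sum>m<s0. M i m * (q^n * u m))"
      using Suc.IH Mnn by (intro sum_mono mult_left_mono) auto
    also have "\<dots> = q^n * (\<Sum>m<s0. M i m * u m)"
      by (simp add: sum_distrib_left mult_ac)
    also have "\<dots> \<le> q^n * (q * u i)" using Mstep[OF Suc.prems] q0 by (intro mult_left_mono) auto
    finally show ?case by (simp add: mult_ac)
  qed
  have "mp s0 M n i j \<le> 3 * q^n" if i: "i < s0" and j: "j < s0" for n i j
  proof -
    have nn: "\<And>j. j \<in> {..<s0} \<Longrightarrow> 0 \<le> mp s0 M n i j * u j"
    proof -
      fix j assume "j \<in> {..<s0}"
      then show "0 \<le> mp s0 M n i j * u j" using mp_nonneg[of M, OF Mnn] ulo[of j] by simp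
    qed
    have "mp s0 M n i j * u j \<le> (\<Sum>j<s0. mp s0 M n i j * u j)"
      using j nn by (intro member_le_sum) auto
    also have "\<dots> \<le> q^n * u i" by (rule pw[OF i])
    also have "\<dots> \<le> q^n * (3/2)" using uhi[OF i] q0 by (intro mult_left_mono) auto
    finally have "mp s0 M n i j * u j \<le> q^n * (3/2)" .
    moreover have "mp s0 M n i j * (1/2) \<le> mp s0 M n i j * u j"
      using ulo[OF j] mp_nonneg[of M, OF Mnn] by (intro mult_left_mono) auto
    ultimately show ?thesis by simp
  qed
  then show ?thesis using tpos q0 q1 unfolding M_def by blast
qed

end




lemma Astar_carrier: "Astar A s0 a b \<in> carrier_mat s0 s0"
  unfolding Astar_def by simp

lemma Astar_index: "i < s0 \<Longrightarrow> j < s0 \<Longrightarrow> Astar A s0 a b $$ (i, j) = complex_of_real (Mt A a b i j)"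
  unfolding Astar_def Mt_def by simp

lemma Astar_pow: "Astar A s0 a b ^\<^sub>m n = Matrix.mat s0 s0 (\<lambda>(i, j). complex_of_real (mp s0 (Mt A a b) n i j))"
proof (induction n)
  case 0
  show ?case by (rule eq_matI) (auto simp: Astar_def)
next
  case (Suc n)
  show ?case
  proof (rule eq_matI)
    fix i j assume i: "i < dim_row (Matrix.mat s0 s0 (\<lambda>(i, j). complex_of_real (mp s0 (Mt A a b) (Suc n) i j)))"
      and j: "j < dim_col (Matrix.mat s0 s0 (\<lambda>(i, j). complex_of_real (mp s0 (Mt A a b) (Suc n) i j)))"
    then have i': "i < s0" and j': "j < s0" by auto
    have "(Astar A s0 a b ^\<^sub>m Suc n) $$ (i, j) = row (Astar A s0 a b ^\<^sub>m n) i \<bullet> col (Astar A s0 a b) j"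
      using i' j' Astar_carrier[of A s0 a b] by simp
    also have "\<dots> = (\<Sum>m \<in> {0..<s0}. complex_of_real (mp s0 (Mt A a b) n i m) * complex_of_real (Mt A a b m j))"
      unfolding scalar_prod_def Suc using i' j' by (simp add: Astar_def Mt_def)
    also have "\<dots> = complex_of_real (\<Sum>m<s0. mp s0 (Mt A a b) n i m * Mt A a b m j)"
      by (simp add: atLeast0LessThan)
    also have "\<dots> = complex_of_real (mp s0 (Mt A a b) (Suc n) i j)"
      using mp_Suc_right[OF i' j'] by simp
    finally show "(Astar A s0 a b ^\<^sub>m Suc n) $$ (i, j) = Matrix.mat s0 s0 (\<lambda>(i, j). complex_of_real (mp s0 (Mt A a b) (Suc n) i j)) $$ (i, j)"
      using i' j' by simp
  qed (use Astar_carrier[of A s0 a b] in auto)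
qed

lemma Gamma_poly:
  assumes "(a, b) \<in> Gamma_bar A s0"
  shows "\<exists>c1 c2. \<forall>n i j. i < s0 \<longrightarrow> j < s0 \<longrightarrow> mp s0 (Mt A a b) n i j \<le> c1 + c2 * real n ^ (s0 - 1)"
proof -
  have sr: "spectral_radius (Astar A s0 a b) \<le> 1" using assms unfolding Gamma_bar_def by simp
  obtain c1 c2 where nb: "\<And>k. norm_bound (Astar A s0 a b ^\<^sub>m k) (c1 + c2 * of_nat k ^ (s0 - 1))"
    using spectral_radius_jnf_norm_bound_le_1_upper_triangular[OF Astar_carrier sr] by blast
  have "mp s0 (Mt A a b) n i j \<le> c1 + c2 * real n ^ (s0 - 1)" if "i < s0" "j < s0" for n i j
  proof -
    have "norm ((Astar A s0 a b ^\<^sub>m n) $$ (i, j)) \<le> c1 + c2 * real n ^ (s0 - 1)"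
      using nb[of n] that unfolding norm_bound_def by (simp add: Astar_pow)
    then show ?thesis using that by (simp add: Astar_pow)
  qed
  then show ?thesis by blast
qed

lemma Gamma_of_bounded:
  assumes s0: "s0 > 0" and B: "\<And>n i j. i < s0 \<Longrightarrow> j < s0 \<Longrightarrow> \<bar>mp s0 (Mt A a b) n i j\<bar> \<le> B"
  shows "(a, b) \<in> Gamma_bar A s0"
proof (rule ccontr)
  assume "(a, b) \<notin> Gamma_bar A s0"
  then have sr: "spectral_radius (Astar A s0 a b) > 1" unfolding Gamma_bar_def by simp
  let ?M = "Astar A s0 a b"
  obtain ev where ev: "ev \<in> spectrum ?M" and nev: "norm ev = spectral_radius ?M"
    using spectral_radius_mem_max(1)[OF Astar_carrier[of A s0 a b] s0] by auto
  obtain v where v: "eigenvector ?M v ev" using ev unfolding spectrum_def eigenvalue_def by auto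
  have vc: "v \<in> carrier_vec s0" and vnz: "v \<noteq> 0\<^sub>v s0" using v Astar_carrier[of A s0 a b] unfolding eigenvector_def by auto
  have "\<exists>i<s0. v $ i \<noteq> 0"
  proof (rule ccontr)
    assume "\<not> ?thesis"
    then have "v = 0\<^sub>v s0" using vc by (intro eq_vecI) auto
    with vnz show False by simp
  qed
  then obtain i0 where i0: "i0 < s0" "v $ i0 \<noteq> 0" by blast
  define V where "V = (\<Sum>j<s0. B * norm (v $ j))"
  have "norm ev ^ k * norm (v $ i0) \<le> V" for k
  proof -
    have "ev ^ k * v $ i0 = ((?M ^\<^sub>m k) *\<^sub>v v) $ i0"
      using eigenvector_pow[OF Astar_carrier v, of k] i0 vc by simp
    also have "\<dots> = (\<Sum>j<s0. complex_of_real (mp s0 (Mt A a b) k i0 j) * v $ j)"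
      using i0 vc by (simp add: Astar_pow scalar_prod_def atLeast0LessThan)
    finally have "norm (ev ^ k * v $ i0) \<le> (\<Sum>j<s0. norm (complex_of_real (mp s0 (Mt A a b) k i0 j) * v $ j))"
      by (simp add: norm_sum)
    also have "\<dots> \<le> V" unfolding V_def
      using B i0 by (intro sum_mono) (simp add: norm_mult mult_right_mono)
    finally show ?thesis by (simp add: norm_mult norm_power)
  qed
  moreover obtain k where "V / norm (v $ i0) < norm ev ^ k"
    using real_arch_pow[of "norm ev" "V / norm (v $ i0)"] sr nev by auto
  then have "V < norm ev ^ k * norm (v $ i0)" using i0 by (simp add: pos_divide_less_eq)
  ultimately show False by (meson not_le)
qed


lemma summable_poly_geom:
  fixes r :: real
  assumes "0 \<le> r" "r < 1"
  shows "summable (\<lambda>n. real n ^ d * r ^ n)"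
proof (rule root_test_convergence)
  have "(\<lambda>n. root n (real n) ^ d * r) \<longlonglongrightarrow> 1 ^ d * r"
    by (intro tendsto_intros LIMSEQ_root)
  moreover have "eventually (\<lambda>n. root n (real n) ^ d * r = root n (norm (real n ^ d * r ^ n))) sequentially"
    using eventually_gt_at_top[of "0::nat"]
  proof eventually_elim
    case (elim n)
    then show ?case using assms
      by (simp add: abs_mult real_root_mult real_root_power real_root_power_cancel)
  qed
  ultimately show "(\<lambda>n. root n (norm (real n ^ d * r ^ n))) \<longlonglongrightarrow> r"
    by (simp add: tendsto_cong)
  show "r < 1" by fact
qed

lemma powr_le_1_plus: fixes x s :: real assumes "0 \<le> x" "0 < s" "s < 1" shows "x powr s \<le> 1 + x"
proof (cases "x \<le> 1")
  case True
  then have "x powr s \<le> 1" using assms by (intro powr_le1) auto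
  then show ?thesis using assms by simp
next
  case False
  then have "x powr s \<le> x powr 1" using assms by (intro powr_mono) auto
  then show ?thesis using False by simp
qed

lemma exp_beats_poly:
  fixes x c1 c2 :: real
  assumes "x > 1"
  shows "\<exists>m. c1 + c2 * real (m * n) ^ d < x ^ m"
proof -
  have r: "0 \<le> 1 / x" "1 / x < 1" using assms by auto
  have l1: "(\<lambda>m. real m ^ d * (1 / x) ^ m) \<longlonglongrightarrow> 0"
    by (rule summable_LIMSEQ_zero[OF summable_poly_geom[OF r]])
  have l2: "(\<lambda>m. (1 / x) ^ m) \<longlonglongrightarrow> 0"
    using r by (intro LIMSEQ_power_zero) auto
  have "(\<lambda>m. c1 * (1 / x) ^ m + (c2 * real n ^ d) * (real m ^ d * (1 / x) ^ m)) \<longlonglongrightarrow> c1 * 0 + (c2 * real n ^ d) * 0"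
    by (intro tendsto_intros l1 l2)
  then have "eventually (\<lambda>m. c1 * (1 / x) ^ m + (c2 * real n ^ d) * (real m ^ d * (1 / x) ^ m) < 1) sequentially"
    by (intro order_tendstoD) auto
  then obtain m where m: "c1 * (1 / x) ^ m + (c2 * real n ^ d) * (real m ^ d * (1 / x) ^ m) < 1"
    by (auto dest: eventually_happens)
  have "(c1 + c2 * real (m * n) ^ d) / x ^ m = c1 * (1 / x) ^ m + (c2 * real n ^ d) * (real m ^ d * (1 / x) ^ m)"
    by (simp add: power_mult_distrib power_divide add_divide_distrib)
  then have "(c1 + c2 * real (m * n) ^ d) / x ^ m < 1" using m by simp
  then show ?thesis using assms by (auto simp: divide_less_eq)
qed

lemma mp_pow_lower:
  assumes M: "\<And>i j. M i j \<ge> 0" and i: "i < s0"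
  shows "mp s0 M (m * n) i i \<ge> mp s0 M n i i ^ m"
proof (induction m)
  case 0
  then show ?case by simp
next
  case (Suc m)
  have "mp s0 M n i i * mp s0 M (m * n) i i \<le> (\<Sum>j<s0. mp s0 M n i j * mp s0 M (m * n) j i)"
    using i by (intro member_le_sum[where f = "\<lambda>j. mp s0 M n i j * mp s0 M (m * n) j i"])
      (auto intro!: mult_nonneg_nonneg mp_nonneg M)
  also have "\<dots> = mp s0 M (Suc m * n) i i" using mp_add[OF i, of M n "m * n" i] by (simp add: add.commute)
  finally have "mp s0 M n i i * mp s0 M (m * n) i i \<le> mp s0 M (Suc m * n) i i" .
  moreover have "mp s0 M n i i * mp s0 M n i i ^ m \<le> mp s0 M n i i * mp s0 M (m * n) i i"
    using Suc by (intro mult_left_mono mp_nonneg M) auto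
  ultimately show ?case by simp
qed

lemma Gamma_bound_dir:
  assumes Anonneg: "\<And>k l i j. A k l i j \<ge> 0" and s0: "s0 > 0"
    and p: "npow s0 (trans_prob A s0) n (0, 0, 0) (e1, e2, 0) > 0"
    and ab: "(a, b) \<in> Gamma_bar A s0"
  shows "a * of_int e1 + b * of_int e2 \<le> - ln (npow s0 (trans_prob A s0) n (0, 0, 0) (e1, e2, 0))"
proof -
  let ?p = "npow s0 (trans_prob A s0) n (0, 0, 0) (e1, e2, 0)"
  let ?M = "Mt A a b"
  have Pnn: "\<And>y y'. 0 \<le> trans_prob A s0 y y'"
    unfolding trans_prob_def using Anonneg by (auto split: prod.splits)
  have lb: "?p * exp (a * of_int e1 + b * of_int e2) \<le> mp s0 ?M n 0 0"
    using npow_bound[OF Anonneg Pnn order_refl s0, of n 0 0 0 e1 e2 a b] by simp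
  obtain c1 c2 where poly: "\<And>n i j. i < s0 \<Longrightarrow> j < s0 \<Longrightarrow> mp s0 ?M n i j \<le> c1 + c2 * real n ^ (s0 - 1)"
    using Gamma_poly[OF ab] by blast
  have "mp s0 ?M n 0 0 \<le> 1"
  proof (rule ccontr)
    assume "\<not> ?thesis"
    then obtain m where m: "c1 + c2 * real (m * n) ^ (s0 - 1) < mp s0 ?M n 0 0 ^ m"
      using exp_beats_poly[of "mp s0 ?M n 0 0" c1 c2 n "s0 - 1"] by auto
    have "mp s0 ?M n 0 0 ^ m \<le> mp s0 ?M (m * n) 0 0"
      by (rule mp_pow_lower[OF Mt_nonneg[OF Anonneg] s0])
    also have "\<dots> \<le> c1 + c2 * real (m * n) ^ (s0 - 1)" using poly s0 by blast
    finally show False using m by simp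
  qed
  then have "?p * exp (a * of_int e1 + b * of_int e2) \<le> 1" using lb by simp
  then have "ln (?p * exp (a * of_int e1 + b * of_int e2)) \<le> 0" using p by simp
  then show ?thesis using p by (simp add: ln_mult)
qed


lemma trans_plus_nonneg: "(\<And>k l i j. A k l i j \<ge> 0) \<Longrightarrow> 0 \<le> trans_plus A s0 y y'"
  unfolding trans_plus_def trans_prob_def by (auto split: prod.splits)

lemma trans_plus_le: "(\<And>k l i j. A k l i j \<ge> 0) \<Longrightarrow> trans_plus A s0 y y' \<le> trans_prob A s0 y y'"
  unfolding trans_plus_def trans_prob_def by (auto split: prod.splits)

lemma tail_bound:
  assumes Anonneg: "\<And>k l i j. A k l i j \<ge> 0" and j': "j' < s0"
    and sm: "summable (\<lambda>n. mp s0 (Mt A a b) n j j')"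
  shows "summable (\<lambda>n. npow s0 (trans_plus A s0) n (x1, x2, j) (x1', x2', j'))"
    and "(\<Sum>n. npow s0 (trans_plus A s0) n (x1, x2, j) (x1', x2', j'))
          \<le> exp (- (a * of_int (x1' - x1) + b * of_int (x2' - x2))) * (\<Sum>n. mp s0 (Mt A a b) n j j')"
proof -
  have le: "npow s0 (trans_plus A s0) n (x1, x2, j) (x1', x2', j') \<le> exp (- (a * of_int (x1' - x1) + b * of_int (x2' - x2))) * mp s0 (Mt A a b) n j j'" for n
  proof -
    define X where "X = a * of_int (x1' - x1) + b * of_int (x2' - x2)"
    have "npow s0 (trans_plus A s0) n (x1, x2, j) (x1', x2', j') * exp X \<le> mp s0 (Mt A a b) n j j'"
      unfolding X_def by (rule npow_bound[OF Anonneg trans_plus_nonneg[OF Anonneg] trans_plus_le[OF Anonneg] j'])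
    then have "npow s0 (trans_plus A s0) n (x1, x2, j) (x1', x2', j') \<le> mp s0 (Mt A a b) n j j' / exp X"
      by (subst pos_le_divide_eq) auto
    then show ?thesis unfolding X_def[symmetric] by (simp add: exp_minus divide_inverse mult.commute)
  qed
  have nn: "\<And>n. 0 \<le> npow s0 (trans_plus A s0) n (x1, x2, j) (x1', x2', j')"
    by (rule npow_nonneg[OF trans_plus_nonneg[OF Anonneg]])
  have sm2: "summable (\<lambda>n. exp (- (a * of_int (x1' - x1) + b * of_int (x2' - x2))) * mp s0 (Mt A a b) n j j')"
    by (rule summable_mult[OF sm])
  show sm3: "summable (\<lambda>n. npow s0 (trans_plus A s0) n (x1, x2, j) (x1', x2', j'))"
    using nn le by (intro summable_comparison_test'[OF sm2]) auto
  show "(\<Sum>n. npow s0 (trans_plus A s0) n (x1, x2, j) (x1', x2', j'))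
          \<le> exp (- (a * of_int (x1' - x1) + b * of_int (x2' - x2))) * (\<Sum>n. mp s0 (Mt A a b) n j j')"
    using suminf_le[OF le sm3 sm2] suminf_mult[OF sm] by simp
qed

lemma qtilde_finite:
  assumes Anonneg: "\<And>k l i j. A k l i j \<ge> 0"
    and sm: "summable (\<lambda>n. npow s0 (trans_plus A s0) n y y')"
  shows "qtilde A s0 y y' = ennreal (\<Sum>n. npow s0 (trans_plus A s0) n y y')"
    and "qtilde A s0 y y' < \<infinity>"
proof -
  have nn: "\<And>n. 0 \<le> npow s0 (trans_plus A s0) n y y'"
    by (rule npow_nonneg[OF trans_plus_nonneg[OF Anonneg]])
  show eq: "qtilde A s0 y y' = ennreal (\<Sum>n. npow s0 (trans_plus A s0) n y y')"
    unfolding qtilde_def by (rule suminf_ennreal2[OF nn sm])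
  show "qtilde A s0 y y' < \<infinity>" unfolding eq by simp
qed

lemma Nblk_eq:
  assumes Anonneg: "\<And>k l i j. A k l i j \<ge> 0"
    and sm: "summable (\<lambda>n. npow s0 (trans_plus A s0) n (fst x, snd x, j) (fst x', snd x', j'))"
  shows "Nblk A s0 x x' j j' = (\<Sum>n. npow s0 (trans_plus A s0) n (fst x, snd x, j) (fst x', snd x', j'))"
proof -
  have nn: "\<And>n. 0 \<le> npow s0 (trans_plus A s0) n (fst x, snd x, j) (fst x', snd x', j')"
    by (rule npow_nonneg[OF trans_plus_nonneg[OF Anonneg]])
  show ?thesis unfolding Nblk_def qtilde_finite(1)[OF Anonneg sm]
    using suminf_nonneg[OF sm nn] by simp
qed

lemma geom_series_summable:
  fixes c :: "nat \<Rightarrow> real" and z :: complex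
  assumes c: "\<And>k. 0 \<le> c k" "\<And>k. c k \<le> D * \<rho> ^ Suc k" and \<rho>: "0 \<le> \<rho>" and zr: "norm z * \<rho> < 1"
  shows "summable (\<lambda>k. z ^ Suc k * complex_of_real (c k))"
proof (rule summable_comparison_test')
  show "summable (\<lambda>k. D * (norm z * \<rho>) * (norm z * \<rho>) ^ k)"
    using zr \<rho> by (intro summable_mult summable_geometric) auto
  fix k :: nat
  have "norm (z ^ Suc k * complex_of_real (c k)) = norm z ^ Suc k * c k"
    using c(1)[of k] by (simp add: norm_mult norm_power)
  also have "\<dots> \<le> norm z ^ Suc k * (D * \<rho> ^ Suc k)"
    using c(2)[of k] by (intro mult_left_mono) auto
  also have "\<dots> = D * (norm z * \<rho>) * (norm z * \<rho>) ^ k"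
    by (simp add: power_mult_distrib mult_ac)
  finally show "norm (z ^ Suc k * complex_of_real (c k)) \<le> D * (norm z * \<rho>) * (norm z * \<rho>) ^ k" .
qed

lemma choose_s:
  fixes L th a0 :: real
  assumes "L < th"
  shows "\<exists>s. 0 < s \<and> s < 1 \<and> L < s * th + (1 - s) * a0"
proof -
  define e where "e = min (1/2) ((th - L) / (2 * (\<bar>th - a0\<bar> + 1)))"
  have "0 < (th - L) / (2 * (\<bar>th - a0\<bar> + 1))" using assms
    by (intro divide_pos_pos) (auto intro: add_nonneg_pos)
  then have e0: "0 < e" unfolding e_def by simp
  have e1: "e \<le> 1/2" unfolding e_def by (rule min.cobounded1)
  have "e * \<bar>th - a0\<bar> \<le> (th - L) / (2 * (\<bar>th - a0\<bar> + 1)) * (\<bar>th - a0\<bar> + 1)"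
    unfolding e_def using assms by (intro mult_mono) auto
  also have "\<dots> = (th - L) / 2"
  proof -
    have "\<bar>th - a0\<bar> + 1 \<noteq> 0" using abs_ge_zero[of "th - a0"] by linarith
    moreover have "\<And>X::real. X \<noteq> 0 \<Longrightarrow> (th - L) / (2 * X) * X = (th - L) / 2" by simp
    ultimately show ?thesis by blast
  qed
  finally have eb: "e * \<bar>th - a0\<bar> \<le> (th - L) / 2" .
  have "e * (th - a0) \<le> e * \<bar>th - a0\<bar>" using e0 by (intro mult_left_mono) auto
  then have "L < (1 - e) * th + (1 - (1 - e)) * a0" using eb assms by (simp add: algebra_simps)
  then show ?thesis using e0 e1 by (intro exI[of _ "1 - e"]) auto
qed

lemma interp_summable:
  assumes Anonneg: "\<And>k l i j. A k l i j \<ge> 0"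
    and ab: "(a, b) \<in> Gamma_bar A s0"
    and star: "\<And>n i j. i < s0 \<Longrightarrow> j < s0 \<Longrightarrow> mp s0 (Mt A a0 b0) n i j \<le> C * q ^ n"
    and q: "0 < q" "q < 1" and C: "C > 0"
    and s: "0 < s" "s < 1"
    and i: "i < s0" and j: "j < s0"
  shows "summable (\<lambda>n. mp s0 (Mt A (s * a + (1 - s) * a0) (s * b + (1 - s) * b0)) n i j)"
proof -
  obtain c1 c2 where poly: "\<And>n i j. i < s0 \<Longrightarrow> j < s0 \<Longrightarrow> mp s0 (Mt A a b) n i j \<le> c1 + c2 * real n ^ (s0 - 1)"
    using Gamma_poly[OF ab] by blast
  define r where "r = q powr (1 - s)"
  have "q powr (1 - s) < 1 powr (1 - s)" using q s by (intro powr_less_mono2) auto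
  then have r: "0 \<le> r" "r < 1" unfolding r_def by auto
  define K where "K = C powr (1 - s)"
  have bound: "mp s0 (Mt A (s * a + (1 - s) * a0) (s * b + (1 - s) * b0)) n i j
      \<le> K * (1 + \<bar>c1\<bar>) * r ^ n + K * \<bar>c2\<bar> * (real n ^ (s0 - 1) * r ^ n)" for n
  proof -
    let ?x = "mp s0 (Mt A a b) n i j" and ?y = "mp s0 (Mt A a0 b0) n i j"
    have x0: "?x \<ge> 0" and y0: "?y \<ge> 0" by (auto intro!: mp_nonneg Mt_nonneg Anonneg)
    have "mp s0 (Mt A (s * a + (1 - s) * a0) (s * b + (1 - s) * b0)) n i j \<le> ?x powr s * ?y powr (1 - s)"
      by (rule mp_interp[OF Anonneg s])
    also have "\<dots> \<le> (1 + ?x) * (C * q ^ n) powr (1 - s)"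
      using x0 y0 s star[OF i j, of n] by (intro mult_mono powr_le_1_plus powr_mono2) auto
    also have "(C * q ^ n) powr (1 - s) = K * r ^ n"
      unfolding K_def r_def using q C
      by (simp add: powr_mult powr_realpow[symmetric] powr_powr mult.commute)
    also have "(1 + ?x) \<le> 1 + \<bar>c1\<bar> + \<bar>c2\<bar> * real n ^ (s0 - 1)"
    proof -
      have "?x \<le> c1 + c2 * real n ^ (s0 - 1)" by (rule poly[OF i j])
      also have "\<dots> \<le> \<bar>c1\<bar> + \<bar>c2\<bar> * real n ^ (s0 - 1)"
        by (intro add_mono mult_right_mono) auto
      finally show ?thesis by simp
    qed
    then have "(1 + ?x) * (K * r ^ n) \<le> (1 + \<bar>c1\<bar> + \<bar>c2\<bar> * real n ^ (s0 - 1)) * (K * r ^ n)"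
      using r unfolding K_def by (intro mult_right_mono) auto
    also have "\<dots> = K * (1 + \<bar>c1\<bar>) * r ^ n + K * \<bar>c2\<bar> * (real n ^ (s0 - 1) * r ^ n)"
      by (simp add: algebra_simps)
    finally show ?thesis .
  qed
  have sm: "summable (\<lambda>n. K * (1 + \<bar>c1\<bar>) * r ^ n + K * \<bar>c2\<bar> * (real n ^ (s0 - 1) * r ^ n))"
    using r by (intro summable_add summable_mult summable_geometric summable_poly_geom) auto
  show ?thesis
  proof (rule summable_comparison_test'[OF sm])
    fix n :: nat
    have "0 \<le> mp s0 (Mt A (s * a + (1 - s) * a0) (s * b + (1 - s) * b0)) n i j"
      by (intro mp_nonneg Mt_nonneg Anonneg)
    then show "norm (mp s0 (Mt A (s * a + (1 - s) * a0) (s * b + (1 - s) * b0)) n i j)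
        \<le> K * (1 + \<bar>c1\<bar>) * r ^ n + K * \<bar>c2\<bar> * (real n ^ (s0 - 1) * r ^ n)"
      using bound[of n] by simp
  qed
qed


lemma series_analytic:
  fixes c :: "nat \<Rightarrow> complex"
  assumes sm: "\<And>z. z \<in> ball 0 R \<Longrightarrow> summable (\<lambda>k. z ^ Suc k * c k)"
  shows "(\<lambda>z. \<Sum>k. z ^ Suc k * c k) analytic_on ball 0 R"
proof -
  define a where "a n = (case n of 0 \<Rightarrow> 0 | Suc k \<Rightarrow> c k)" for n
  have "(\<lambda>z. \<Sum>k. z ^ Suc k * c k) holomorphic_on ball 0 R"
  proof (rule power_series_holomorphic)
    fix w :: complex assume w: "w \<in> ball 0 R"
    have "(\<lambda>k. w ^ Suc k * c k) sums (\<Sum>k. w ^ Suc k * c k)"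
      using sm[OF w] by (rule summable_sums)
    then have "(\<lambda>n. a (Suc n) * (w - 0) ^ Suc n) sums ((\<Sum>k. w ^ Suc k * c k) + a 0 * (w - 0) ^ 0)"
      unfolding a_def by (simp add: mult.commute)
    moreover have "a 0 = 0" by (simp add: a_def)
    ultimately show "(\<lambda>n. a n * (w - 0) ^ n) sums (\<Sum>k. w ^ Suc k * c k)"
      using sums_Suc_iff[of "\<lambda>n. a n * (w - 0) ^ n"] by simp
  qed
  then show ?thesis by (simp add: analytic_on_open)
qed

lemma Nblk_series_summable:
  assumes Anonneg: "\<And>k l i j. A k l i j \<ge> 0" and j: "j < s0" and j': "j' < s0"
    and sm: "summable (\<lambda>n. mp s0 (Mt A \<alpha> \<beta>) n j j')"
    and ex: "\<And>k. \<alpha> * of_int (X k - x1) + \<beta> * of_int (Y k - x2) = real (Suc k) * \<gamma> - c0"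
    and zlt: "norm z < exp \<gamma>"
  shows "summable (\<lambda>k. z ^ Suc k * complex_of_real (Nblk A s0 (x1, x2) (X k, Y k) j j'))"
proof (rule geom_series_summable)
  define S where "S = (\<Sum>n. mp s0 (Mt A \<alpha> \<beta>) n j j')"
  fix k
  have sm1: "summable (\<lambda>n. npow s0 (trans_plus A s0) n (x1, x2, j) (X k, Y k, j'))"
    by (rule tail_bound(1)[OF Anonneg j' sm])
  have eq: "Nblk A s0 (x1, x2) (X k, Y k) j j' = (\<Sum>n. npow s0 (trans_plus A s0) n (x1, x2, j) (X k, Y k, j'))"
    using Nblk_eq[OF Anonneg, where x="(x1, x2)" and j=j and x'="(X k, Y k)" and j'=j'] sm1 by simp
  have nn: "\<And>n. 0 \<le> npow s0 (trans_plus A s0) n (x1, x2, j) (X k, Y k, j')"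
    by (rule npow_nonneg[OF trans_plus_nonneg[OF Anonneg]])
  show "0 \<le> Nblk A s0 (x1, x2) (X k, Y k) j j'" unfolding eq by (rule suminf_nonneg[OF sm1 nn])
  have "Nblk A s0 (x1, x2) (X k, Y k) j j' \<le> exp (- (\<alpha> * of_int (X k - x1) + \<beta> * of_int (Y k - x2))) * S"
    unfolding eq S_def by (rule tail_bound(2)[OF Anonneg j' sm])
  also have "exp (- (\<alpha> * of_int (X k - x1) + \<beta> * of_int (Y k - x2))) = exp c0 * exp (- \<gamma>) ^ Suc k"
  proof -
    have "- (\<alpha> * of_int (X k - x1) + \<beta> * of_int (Y k - x2)) = c0 + real (Suc k) * (- \<gamma>)"
      using ex[of k] by simp
    then show ?thesis by (simp only: exp_add exp_of_nat_mult)
  qed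
  finally show "Nblk A s0 (x1, x2) (X k, Y k) j j' \<le> (exp c0 * S) * exp (- \<gamma>) ^ Suc k"
    by (simp add: mult_ac)
next
  show "0 \<le> exp (- \<gamma>)" by simp
  show "norm z * exp (- \<gamma>) < 1" using zlt by (simp add: exp_minus divide_inverse[symmetric] pos_divide_less_eq)
qed


lemma sum_swap3: "(\<Sum>j<s0. \<Sum>k\<in>steps. \<Sum>l\<in>steps. f k l j) = (\<Sum>k\<in>steps. \<Sum>l\<in>steps. \<Sum>j<(s0::nat). f k l j)"
proof -
  have "(\<Sum>j<s0. \<Sum>k\<in>steps. \<Sum>l\<in>steps. f k l j) = (\<Sum>k\<in>steps. \<Sum>j<s0. \<Sum>l\<in>steps. f k l j)"
    by (rule sum.swap)
  also have "\<dots> = (\<Sum>k\<in>steps. \<Sum>l\<in>steps. \<Sum>j<s0. f k l j)"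
    by (rule sum.cong[OF refl], rule sum.swap)
  finally show ?thesis .
qed

lemma drift_eq1: "(\<Sum>j<s0. \<Sum>k\<in>steps. \<Sum>l\<in>steps. (of_int k * 1 + of_int l * 0) * A k l i j)
   = (\<Sum>l\<in>steps. \<Sum>j<(s0::nat). A 1 l i j - A (-1) l i j)"
  unfolding sum_swap3 by (simp add: steps_def sum_subtractf sum.distrib sum_negf)

lemma drift_eq2: "(\<Sum>j<s0. \<Sum>k\<in>steps. \<Sum>l\<in>steps. (of_int k * 0 + of_int l * 1) * A k l i j)
   = (\<Sum>k\<in>steps. \<Sum>j<(s0::nat). A k 1 i j - A k (-1) i j)"
  unfolding sum_swap3 by (simp add: steps_def sum_subtractf sum.distrib sum_negf)

theorem proposition4p4:
  fixes A :: "int \<Rightarrow> int \<Rightarrow> nat \<Rightarrow> nat \<Rightarrow> real" and s0 :: nat and pi :: "nat \<Rightarrow> real"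
  assumes s0_pos: "s0 > 0"
    and A_nonneg: "\<And>k l i j. A k l i j \<ge> 0"
    and A_stoch: "\<And>i. i < s0 \<Longrightarrow> (\<Sum>k\<in>steps. \<Sum>l\<in>steps. \<Sum>j<s0. A k l i j) = 1"
    and pi_nonneg: "\<And>j. j < s0 \<Longrightarrow> pi j \<ge> 0"
    and pi_sum: "(\<Sum>j<s0. pi j) = 1"
    and pi_stat: "\<And>j'. j' < s0 \<Longrightarrow>
        (\<Sum>i<s0. pi i * (\<Sum>k\<in>steps. \<Sum>l\<in>steps. A k l i j')) = pi j'"
    and drift: "(\<Sum>i<s0. pi i * (\<Sum>l\<in>steps. \<Sum>j<s0. A 1 l i j - A (-1) l i j)) < 0
             \<or> (\<Sum>i<s0. pi i * (\<Sum>k\<in>steps. \<Sum>j<s0. A k 1 i j - A k (-1) i j)) < 0"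
    and irred: "irreducible_on s0 (trans_prob A s0) (state_space s0)"
    and aper: "aperiodic_on s0 (trans_prob A s0) (state_space s0)"
    and irred_plus: "irreducible_on s0 (trans_plus A s0) (pos_space s0)"
  shows "\<forall>x1 x2 j j'. 0 \<le> x1 \<and> 0 \<le> x2 \<and> j < s0 \<and> j' < s0 \<longrightarrow>
    (let R1 = exp (Sup {th1. \<exists>th2. (th1, th2) \<in> Gamma_bar A s0});
         R2 = exp (Sup {th2. \<exists>th1. (th1, th2) \<in> Gamma_bar A s0}) in
      (\<forall>k::nat. k \<ge> 1 \<longrightarrow> qtilde A s0 (x1, x2, j) (int k, 0, j') < \<infinity>
                          \<and> qtilde A s0 (x1, x2, j) (0, int k, j') < \<infinity>)
    \<and> (\<forall>z\<in>ball 0 R1. summable (\<lambda>k. z ^ Suc k * complex_of_real (Nblk A s0 (x1, x2) (int (Suc k), 0) j j')))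
    \<and> (\<lambda>z. Phi1 A s0 (x1, x2) z j j') analytic_on ball 0 R1
    \<and> (\<forall>w\<in>ball 0 R2. summable (\<lambda>k. w ^ Suc k * complex_of_real (Nblk A s0 (x1, x2) (0, int (Suc k)) j j')))
    \<and> (\<lambda>w. Phi2 A s0 (x1, x2) w j j') analytic_on ball 0 R2)"
  proof -
  have Pnn: "\<And>y y'. 0 \<le> trans_prob A s0 y y'"
    unfolding trans_prob_def using A_nonneg by (auto split: prod.splits)
  have irr_ph: "\<exists>n. mp s0 (Mt A 0 0) n i j > 0" if i: "i < s0" and j: "j < s0" for i j
  proof -
    have "(0, 0, i) \<in> state_space s0" "(0, 0, j) \<in> state_space s0"
      using i j by (auto simp: state_space_def)
    then obtain n where n: "npow s0 (trans_prob A s0) n (0, 0, i) (0, 0, j) > 0"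
      using irred unfolding irreducible_on_def by blast
    have "npow s0 (trans_prob A s0) n (0, 0, i) (0, 0, j) * exp (0 * of_int (0 - 0) + 0 * of_int (0 - 0))
        \<le> mp s0 (Mt A 0 0) n i j"
      by (rule npow_bound[OF A_nonneg Pnn order_refl j])
    then have "npow s0 (trans_prob A s0) n (0, 0, i) (0, 0, j) \<le> mp s0 (Mt A 0 0) n i j" by simp
    with n show ?thesis by (intro exI[of _ n]) linarith
  qed
  obtain t u1 u2 C q where tpos: "t > 0" and q0: "0 \<le> q" and q1: "q < 1"
    and star: "\<And>n i j. i < s0 \<Longrightarrow> j < s0 \<Longrightarrow> mp s0 (Mt A (t * u1) (t * u2)) n i j \<le> C * q ^ n"
  proof -
    from drift consider
      (d1) "(\<Sum>i<s0. pi i * (\<Sum>l\<in>steps. \<Sum>j<s0. A 1 l i j - A (-1) l i j)) < 0"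
    | (d2) "(\<Sum>i<s0. pi i * (\<Sum>k\<in>steps. \<Sum>j<s0. A k 1 i j - A k (-1) i j)) < 0"
      by blast
    then show ?thesis
    proof cases
      case d1
      interpret drift_setting s0 A pi 1 0
      proof (unfold_locales)
        show "\<And>i j. i < s0 \<Longrightarrow> j < s0 \<Longrightarrow> \<exists>n. 0 < mp s0 (Mt A 0 0) n i j" by (rule irr_ph)
        show "\<And>k l. k \<in> steps \<Longrightarrow> l \<in> steps \<Longrightarrow> \<bar>of_int k * 1 + of_int l * 0\<bar> \<le> (1::real)"
          by (auto simp: steps_def)
        show "(\<Sum>i<s0. pi i * (\<Sum>j<s0. \<Sum>k\<in>steps. \<Sum>l\<in>steps. (of_int k * 1 + of_int l * 0) * A k l i j)) < 0"
          using d1 by (simp only: drift_eq1)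
      qed (use s0_pos A_nonneg A_stoch pi_nonneg pi_sum pi_stat in auto)
      from theta_star obtain t C q where "t > 0" "0 \<le> q" "q < 1"
        "\<forall>n i j. i < s0 \<longrightarrow> j < s0 \<longrightarrow> mp s0 (Mt A (t * 1) (t * 0)) n i j \<le> C * q ^ n" by blast
      then show ?thesis using that[of t q 1 0 C] by blast
    next
      case d2
      interpret drift_setting s0 A pi 0 1
      proof (unfold_locales)
        show "\<And>i j. i < s0 \<Longrightarrow> j < s0 \<Longrightarrow> \<exists>n. 0 < mp s0 (Mt A 0 0) n i j" by (rule irr_ph)
        show "\<And>k l. k \<in> steps \<Longrightarrow> l \<in> steps \<Longrightarrow> \<bar>of_int k * 0 + of_int l * 1\<bar> \<le> (1::real)"
          by (auto simp: steps_def)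
        show "(\<Sum>i<s0. pi i * (\<Sum>j<s0. \<Sum>k\<in>steps. \<Sum>l\<in>steps. (of_int k * 0 + of_int l * 1) * A k l i j)) < 0"
          using d2 by (simp only: drift_eq2)
      qed (use s0_pos A_nonneg A_stoch pi_nonneg pi_sum pi_stat in auto)
      from theta_star obtain t C q where "t > 0" "0 \<le> q" "q < 1"
        "\<forall>n i j. i < s0 \<longrightarrow> j < s0 \<longrightarrow> mp s0 (Mt A (t * 0) (t * 1)) n i j \<le> C * q ^ n" by blast
      then show ?thesis using that[of t q 0 1 C] by blast
    qed
  qed
  define a0 where "a0 = t * u1"
  define b0 where "b0 = t * u2"
  define q' where "q' = max q (1/2)"
  define C' where "C' = max C 1"
  have q'0: "0 < q'" and q'1: "q' < 1" unfolding q'_def using q1 by auto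
  have C'0: "C' > 0" unfolding C'_def by simp
  have star': "mp s0 (Mt A a0 b0) n i j \<le> C' * q' ^ n" if "i < s0" "j < s0" for n i j
  proof -
    have "C * q ^ n \<le> C' * q' ^ n"
    proof (cases "C \<le> 0")
      case True
      then have "C * q ^ n \<le> 0" using q0 by (simp add: mult_nonpos_nonneg)
      also have "0 \<le> C' * q' ^ n" using C'0 q'0 by simp
      finally show ?thesis .
    next
      case False
      have "q ^ n \<le> q' ^ n" unfolding q'_def using q0 by (intro power_mono) auto
      then show ?thesis using False q0 unfolding C'_def by (intro mult_mono) auto
    qed
    then show ?thesis using star[OF that, of n] unfolding a0_def b0_def by simp
  qed
  have star_sum: "summable (\<lambda>n. mp s0 (Mt A a0 b0) n i j)" if "i < s0" "j < s0" for i j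
  proof (rule summable_comparison_test')
    show "summable (\<lambda>n. C' * q' ^ n)" using q'0 q'1 by (intro summable_mult summable_geometric) auto
    fix n
    show "norm (mp s0 (Mt A a0 b0) n i j) \<le> C' * q' ^ n"
      using star'[OF that] mp_nonneg[OF Mt_nonneg[OF A_nonneg]] by simp
  qed
  have star_in: "(a0, b0) \<in> Gamma_bar A s0"
  proof (rule Gamma_of_bounded[OF s0_pos])
    fix n i j assume ij: "i < s0" "j < s0"
    have "mp s0 (Mt A a0 b0) n i j \<le> C' * q' ^ n" by (rule star'[OF ij])
    also have "\<dots> \<le> C' * 1" using q'0 q'1 C'0 by (intro mult_left_mono power_le_one) auto
    finally show "\<bar>mp s0 (Mt A a0 b0) n i j\<bar> \<le> C'" using mp_nonneg[OF Mt_nonneg[OF A_nonneg]] by simp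
  qed
  define S1 where "S1 = {th1. \<exists>th2. (th1, th2) \<in> Gamma_bar A s0}"
  define S2 where "S2 = {th2. \<exists>th1. (th1, th2) \<in> Gamma_bar A s0}"
  have ne1: "S1 \<noteq> {}" and ne2: "S2 \<noteq> {}" unfolding S1_def S2_def using star_in by auto
  have bdd1: "bdd_above S1"
  proof -
    have "(0, 0, 0) \<in> state_space s0" "(1, 0, 0) \<in> state_space s0" using s0_pos by (auto simp: state_space_def)
    then obtain n where n: "npow s0 (trans_prob A s0) n (0, 0, 0) (1, 0, 0) > 0"
      using irred unfolding irreducible_on_def by blast
    have "a \<le> - ln (npow s0 (trans_prob A s0) n (0, 0, 0) (1, 0, 0))" if "a \<in> S1" for a
    proof -
      from that obtain b where ab: "(a, b) \<in> Gamma_bar A s0" unfolding S1_def by blast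
      show ?thesis using Gamma_bound_dir[OF A_nonneg s0_pos n ab] by simp
    qed
    then show ?thesis by (rule bdd_aboveI)
  qed
  have bdd2: "bdd_above S2"
  proof -
    have "(0, 0, 0) \<in> state_space s0" "(0, 1, 0) \<in> state_space s0" using s0_pos by (auto simp: state_space_def)
    then obtain n where n: "npow s0 (trans_prob A s0) n (0, 0, 0) (0, 1, 0) > 0"
      using irred unfolding irreducible_on_def by blast
    have "b \<le> - ln (npow s0 (trans_prob A s0) n (0, 0, 0) (0, 1, 0))" if "b \<in> S2" for b
    proof -
      from that obtain a where ab: "(a, b) \<in> Gamma_bar A s0" unfolding S2_def by blast
      show ?thesis using Gamma_bound_dir[OF A_nonneg s0_pos n ab] by simp
    qed
    then show ?thesis by (rule bdd_aboveI)
  qed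
  have sum1: "summable (\<lambda>k. z ^ Suc k * complex_of_real (Nblk A s0 (x1, x2) (int (Suc k), 0) j j'))"
    if j: "j < s0" and j': "j' < s0" and z: "norm z < exp (Sup S1)" for x1 x2 j j' z
  proof (cases "z = 0")
    case True
    then show ?thesis by simp
  next
    case False
    then have "ln (norm z) < ln (exp (Sup S1))" using z by (subst ln_less_cancel_iff) auto
    then have "ln (norm z) < Sup S1" by simp
    then obtain th1 where th1: "th1 \<in> S1" "ln (norm z) < th1" using less_cSup_iff[OF ne1 bdd1] by blast
    then obtain th2 where th: "(th1, th2) \<in> Gamma_bar A s0" unfolding S1_def by blast
    obtain s where s: "0 < s" "s < 1" "ln (norm z) < s * th1 + (1 - s) * a0"
      using choose_s[OF th1(2)] by blast
    define \<alpha> where "\<alpha> = s * th1 + (1 - s) * a0"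
    define \<beta> where "\<beta> = s * th2 + (1 - s) * b0"
    have sm: "summable (\<lambda>n. mp s0 (Mt A \<alpha> \<beta>) n j j')"
      unfolding \<alpha>_def \<beta>_def
      by (rule interp_summable[OF A_nonneg th star' q'0 q'1 C'0 s(1,2) j j'])
    have zl: "norm z < exp \<alpha>"
    proof -
      have "exp (ln (norm z)) < exp \<alpha>" using s(3) unfolding \<alpha>_def by simp
      then show ?thesis using False by simp
    qed
    have ex: "\<And>k. \<alpha> * of_int (int (Suc k) - x1) + \<beta> * of_int (0 - x2) = real (Suc k) * \<alpha> - (\<alpha> * of_int x1 + \<beta> * of_int x2)"
      by (simp add: algebra_simps)
    show ?thesis by (rule Nblk_series_summable[OF A_nonneg j j' sm ex zl])
  qed
  have sum2: "summable (\<lambda>k. z ^ Suc k * complex_of_real (Nblk A s0 (x1, x2) (0, int (Suc k)) j j'))"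
    if j: "j < s0" and j': "j' < s0" and z: "norm z < exp (Sup S2)" for x1 x2 j j' z
  proof (cases "z = 0")
    case True
    then show ?thesis by simp
  next
    case False
    then have "ln (norm z) < ln (exp (Sup S2))" using z by (subst ln_less_cancel_iff) auto
    then have "ln (norm z) < Sup S2" by simp
    then obtain th2 where th2: "th2 \<in> S2" "ln (norm z) < th2" using less_cSup_iff[OF ne2 bdd2] by blast
    then obtain th1 where th: "(th1, th2) \<in> Gamma_bar A s0" unfolding S2_def by blast
    obtain s where s: "0 < s" "s < 1" "ln (norm z) < s * th2 + (1 - s) * b0"
      using choose_s[OF th2(2)] by blast
    define \<alpha> where "\<alpha> = s * th1 + (1 - s) * a0"
    define \<beta> where "\<beta> = s * th2 + (1 - s) * b0"
    have sm: "summable (\<lambda>n. mp s0 (Mt A \<alpha> \<beta>) n j j')"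
      unfolding \<alpha>_def \<beta>_def
      by (rule interp_summable[OF A_nonneg th star' q'0 q'1 C'0 s(1,2) j j'])
    have zl: "norm z < exp \<beta>"
    proof -
      have "exp (ln (norm z)) < exp \<beta>" using s(3) unfolding \<beta>_def by simp
      then show ?thesis using False by simp
    qed
    have ex: "\<And>k. \<alpha> * of_int (0 - x1) + \<beta> * of_int (int (Suc k) - x2) = real (Suc k) * \<beta> - (\<alpha> * of_int x1 + \<beta> * of_int x2)"
      by (simp add: algebra_simps)
    show ?thesis by (rule Nblk_series_summable[OF A_nonneg j j' sm ex zl])
  qed
  show ?thesis
  proof (intro allI impI)
    fix x1 x2 :: int and j j' :: nat
    assume H: "0 \<le> x1 \<and> 0 \<le> x2 \<and> j < s0 \<and> j' < s0"
    then have j: "j < s0" and j': "j' < s0" by auto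
    have fin: "qtilde A s0 (x1, x2, j) (X, Y, j') < \<infinity>" for X Y
      by (rule qtilde_finite(2)[OF A_nonneg tail_bound(1)[OF A_nonneg j' star_sum[OF j j']]])
    have R1: "\<forall>z\<in>ball 0 (exp (Sup S1)). summable (\<lambda>k. z ^ Suc k * complex_of_real (Nblk A s0 (x1, x2) (int (Suc k), 0) j j'))"
      using sum1[OF j j'] by simp
    have R2: "\<forall>z\<in>ball 0 (exp (Sup S2)). summable (\<lambda>k. z ^ Suc k * complex_of_real (Nblk A s0 (x1, x2) (0, int (Suc k)) j j'))"
      using sum2[OF j j'] by simp
    have A1: "(\<lambda>z. Phi1 A s0 (x1, x2) z j j') analytic_on ball 0 (exp (Sup S1))"
      unfolding Phi1_def by (rule series_analytic) (use R1 in blast)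
    have A2: "(\<lambda>w. Phi2 A s0 (x1, x2) w j j') analytic_on ball 0 (exp (Sup S2))"
      unfolding Phi2_def by (rule series_analytic) (use R2 in blast)
    show "let R1 = exp (Sup {th1. \<exists>th2. (th1, th2) \<in> Gamma_bar A s0});
         R2 = exp (Sup {th2. \<exists>th1. (th1, th2) \<in> Gamma_bar A s0}) in
      (\<forall>k::nat. k \<ge> 1 \<longrightarrow> qtilde A s0 (x1, x2, j) (int k, 0, j') < \<infinity>
                          \<and> qtilde A s0 (x1, x2, j) (0, int k, j') < \<infinity>)
    \<and> (\<forall>z\<in>ball 0 R1. summable (\<lambda>k. z ^ Suc k * complex_of_real (Nblk A s0 (x1, x2) (int (Suc k), 0) j j')))
    \<and> (\<lambda>z. Phi1 A s0 (x1, x2) z j j') analytic_on ball 0 R1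
    \<and> (\<forall>w\<in>ball 0 R2. summable (\<lambda>k. w ^ Suc k * complex_of_real (Nblk A s0 (x1, x2) (0, int (Suc k)) j j')))
    \<and> (\<lambda>w. Phi2 A s0 (x1, x2) w j j') analytic_on ball 0 R2"
    proof -
      have F: "\<forall>k::nat. k \<ge> 1 \<longrightarrow> qtilde A s0 (x1, x2, j) (int k, 0, j') < \<infinity>
                          \<and> qtilde A s0 (x1, x2, j) (0, int k, j') < \<infinity>"
        using fin by blast
      show ?thesis unfolding Let_def S1_def[symmetric] S2_def[symmetric]
        by (intro conjI F R1 A1 R2 A2)
    qed
  qed
qed


end
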